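(* Let $G$ and $H$ be graphs, each with at least $3$ vertices, and suppose $G$ is connected. Then $$\lambda_3(G\circ H)\ \ge\ \lambda_3(H)+\lambda_3(G)\,|V(H)|.$$ Moreover, this lower bound is sharp: there exist such $G,H$ for which equality holds.
   Context: All graphs are simple, finite and undirected. For a graph $G$ and a set $S\subseteq V(G)$ with $|S|\ge 2$, an $S$-tree (Steiner tree connecting $S$) is a subgraph of $G$ that is a tree containing all vertices of $S$. $\lambda(S)$ (also written $\lambda_G(S)$) is the maximum number of pairwise edge-disjoint $S$-trees in $G$. The generalized $k$-edge-connectivity is $\lambda_k(G)=\min\{\lambda(S): S\subseteq V(G),\ |S|=k\}$, with the convention $\lambda_k(G)=0$ if $G$ is disconnected. The lexicographic product $G\circ H$ has vertex set $V(G)\times V(H)$, and $(u,v)$ is adjacent to $(u',v')$ iff either $uu'\in E(G)$, or $u=u'$ and $vv'\in E(H)$. *)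

theory Defs
  imports Main
begin

definition graph :: "'a set \<Rightarrow> 'a set set \<Rightarrow> bool" where
  "graph V E \<longleftrightarrow> finite V \<and> (\<forall>e\<in>E. \<exists>x y. x \<in> V \<and> y \<in> V \<and> x \<noteq> y \<and> e = {x, y})"

definition adj_rel :: "'a set \<Rightarrow> 'a set set \<Rightarrow> ('a \<times> 'a) set" where
  "adj_rel V E = {(a, b). a \<in> V \<and> b \<in> V \<and> {a, b} \<in> E}"

definition connected_graph :: "'a set \<Rightarrow> 'a set set \<Rightarrow> bool" where
  "connected_graph V E \<longleftrightarrow> (\<forall>x\<in>V. \<forall>y\<in>V. (x, y) \<in> (adj_rel V E)\<^sup>*)"

definition is_tree :: "'a set \<Rightarrow> 'a set set \<Rightarrow> bool" where
  "is_tree V E \<longleftrightarrow> V \<noteq> {} \<and> graph V E \<and> connected_graph V E \<and> card E + 1 = card V"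

definition steiner_tree :: "'a set \<Rightarrow> 'a set set \<Rightarrow> 'a set \<Rightarrow> 'a set \<Rightarrow> 'a set set \<Rightarrow> bool" where
  "steiner_tree V E S VT ET \<longleftrightarrow> S \<subseteq> VT \<and> VT \<subseteq> V \<and> ET \<subseteq> E \<and> is_tree VT ET"

definition lambda_S :: "'a set \<Rightarrow> 'a set set \<Rightarrow> 'a set \<Rightarrow> nat" where
  "lambda_S V E S = Max {k. \<exists>T :: nat \<Rightarrow> 'a set \<times> 'a set set.
      (\<forall>i<k. steiner_tree V E S (fst (T i)) (snd (T i))) \<and>
      (\<forall>i<k. \<forall>j<k. i \<noteq> j \<longrightarrow> snd (T i) \<inter> snd (T j) = {})}"

definition lambda_k :: "nat \<Rightarrow> 'a set \<Rightarrow> 'a set set \<Rightarrow> nat" where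
  "lambda_k k V E = (if connected_graph V E
      then Min {lambda_S V E S | S. S \<subseteq> V \<and> card S = k} else 0)"

definition lex_edges :: "'a set \<Rightarrow> 'a set set \<Rightarrow> 'b set \<Rightarrow> 'b set set \<Rightarrow> ('a \<times> 'b) set set" where
  "lex_edges VG EG VH EH = {{(u, v), (u', v')} | u v u' v'.
      u \<in> VG \<and> u' \<in> VG \<and> v \<in> VH \<and> v' \<in> VH \<and>
      ({u, u'} \<in> EG \<or> (u = u' \<and> {v, v'} \<in> EH))}"

end

theory Submission
  imports Defs
begin

lemma adj_rel_mono: "V \<subseteq> V' \<Longrightarrow> E \<subseteq> E' \<Longrightarrow> adj_rel V E \<subseteq> adj_rel V' E'"
  unfolding adj_rel_def by auto

lemma rtrancl_adj_mono: "V \<subseteq> V' \<Longrightarrow> E \<subseteq> E' \<Longrightarrow> (x,y) \<in> (adj_rel V E)\<^sup>* \<Longrightarrow> (x,y) \<in> (adj_rel V' E')\<^sup>*"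
  using rtrancl_mono[OF adj_rel_mono] by blast

lemma adj_sym: "(x,y) \<in> adj_rel V E \<Longrightarrow> (y,x) \<in> adj_rel V E"
  unfolding adj_rel_def by (auto simp: insert_commute)

lemma graph_finite_E: "graph V E \<Longrightarrow> finite E"
proof -
  assume g: "graph V E"
  have "E \<subseteq> Pow V"
  proof
    fix e assume "e \<in> E"
    then obtain x y where "x \<in> V" "y \<in> V" "e = {x,y}" using g unfolding graph_def by blast
    then show "e \<in> Pow V" by simp
  qed
  moreover have "finite (Pow V)" using g unfolding graph_def by simp
  ultimately show ?thesis by (rule finite_subset)
qed

lemma graph_edge: "graph V E \<Longrightarrow> e \<in> E \<Longrightarrow> \<exists>x y. x \<in> V \<and> y \<in> V \<and> x \<noteq> y \<and> e = {x,y}"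
  unfolding graph_def by blast

lemma graph_edge2: "graph V E \<Longrightarrow> {x,y} \<in> E \<Longrightarrow> x \<in> V \<and> y \<in> V \<and> x \<noteq> y"
proof -
  assume g: "graph V E" "{x,y} \<in> E"
  then obtain a b where "a \<in> V" "b \<in> V" "a \<noteq> b" "{x,y} = {a,b}" unfolding graph_def by blast
  then show ?thesis by (metis doubleton_eq_iff)
qed

lemma tree_facts:
  assumes "is_tree V E"
  shows "graph V E" "finite V" "V \<noteq> {}" "connected_graph V E" "card E + 1 = card V"
  using assms by (simp_all add: is_tree_def graph_def)

lemma tree_nb:
  assumes t: "is_tree V E" and x: "x \<in> V" and c: "2 \<le> card V"
  shows "\<exists>y. {x,y} \<in> E"
proof -
  have fin: "finite V" using t unfolding is_tree_def graph_def by blast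
  obtain z where z: "z \<in> V" "z \<noteq> x"
  proof -
    have "card (V - {x}) \<ge> 1" using c x fin by simp
    then obtain z where "z \<in> V - {x}" by (metis all_not_in_conv card.empty not_one_le_zero)
    then show ?thesis using that by blast
  qed
  have "(x,z) \<in> (adj_rel V E)\<^sup>*" using t x z unfolding is_tree_def connected_graph_def by blast
  then show ?thesis using z(2)
    by (cases rule: converse_rtranclE) (auto simp: adj_rel_def)
qed

lemma image_tree:
  assumes t: "is_tree V E" and inj: "inj_on f V"
  shows "is_tree (f ` V) ((\<lambda>e. f ` e) ` E)"
proof -
  have g: "graph V E" and fin: "finite V" and ne: "V \<noteq> {}" and cn: "connected_graph V E"
    and ce: "card E + 1 = card V"
    using t unfolding is_tree_def graph_def by auto
  have g2: "graph (f ` V) ((\<lambda>e. f ` e) ` E)"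
    unfolding graph_def
  proof (intro conjI ballI)
    show "finite (f ` V)" using fin by simp
    fix e' assume "e' \<in> (\<lambda>e. f ` e) ` E"
    then obtain e where e: "e \<in> E" "e' = f ` e" by blast
    obtain x y where xy: "x \<in> V" "y \<in> V" "x \<noteq> y" "e = {x,y}" using graph_edge[OF g e(1)] by blast
    have "f x \<noteq> f y" using inj xy by (meson inj_on_eq_iff)
    then show "\<exists>a b. a \<in> f ` V \<and> b \<in> f ` V \<and> a \<noteq> b \<and> e' = {a, b}" using xy e by auto
  qed
  have cn2: "connected_graph (f ` V) ((\<lambda>e. f ` e) ` E)"
    unfolding connected_graph_def
  proof (intro ballI)
    fix a b assume a: "a \<in> f ` V" and b: "b \<in> f ` V"
    then obtain x y where xy: "x \<in> V" "y \<in> V" "a = f x" "b = f y" by blast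
    have "(x,y) \<in> (adj_rel V E)\<^sup>*" using cn xy unfolding connected_graph_def by blast
    then have "(f x, f y) \<in> (adj_rel (f ` V) ((\<lambda>e. f ` e) ` E))\<^sup>*"
    proof (induction rule: rtrancl_induct)
      case base then show ?case by simp
    next
      case (step y z)
      then have "(f y, f z) \<in> adj_rel (f ` V) ((\<lambda>e. f ` e) ` E)"
        unfolding adj_rel_def by (auto intro!: image_eqI[where x="{y,z}"])
      then show ?case using step by (meson rtrancl.rtrancl_into_rtrancl)
    qed
    then show "(a,b) \<in> (adj_rel (f ` V) ((\<lambda>e. f ` e) ` E))\<^sup>*" using xy by simp
  qed
  have "inj_on (\<lambda>e. f ` e) E"
  proof (rule inj_onI)
    fix e1 e2 assume "e1 \<in> E" "e2 \<in> E" "f ` e1 = f ` e2"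
    moreover have "e1 \<subseteq> V" "e2 \<subseteq> V" using graph_edge[OF g] \<open>e1 \<in> E\<close> \<open>e2 \<in> E\<close> by blast+
    ultimately show "e1 = e2" using inj inj_on_image_eq_iff by metis
  qed
  then have "card ((\<lambda>e. f ` e) ` E) = card E" by (rule card_image)
  moreover have "card (f ` V) = card V" using inj by (rule card_image)
  ultimately show ?thesis using g2 cn2 ce ne unfolding is_tree_def by auto
qed

lemma leaves_tree:
  assumes t: "is_tree V E" and fP: "finite P" and dis: "P \<inter> V = {}" and att: "\<forall>p\<in>P. att p \<in> V"
  shows "is_tree (V \<union> P) (E \<union> (\<lambda>p. {p, att p}) ` P)"
proof -
  have g: "graph V E" and fin: "finite V" and ne: "V \<noteq> {}" and cn: "connected_graph V E"
    and ce: "card E + 1 = card V"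
    using t unfolding is_tree_def graph_def by auto
  let ?V = "V \<union> P" and ?E = "E \<union> (\<lambda>p. {p, att p}) ` P"
  have g2: "graph ?V ?E"
    unfolding graph_def
  proof (intro conjI ballI)
    show "finite ?V" using fin fP by simp
    fix e assume "e \<in> ?E"
    then show "\<exists>x y. x \<in> ?V \<and> y \<in> ?V \<and> x \<noteq> y \<and> e = {x, y}"
    proof
      assume "e \<in> E" then show ?thesis using graph_edge[OF g] by blast
    next
      assume "e \<in> (\<lambda>p. {p, att p}) ` P"
      then obtain p where "p \<in> P" "e = {p, att p}" by blast
      moreover have "att p \<in> V" "p \<notin> V" using att dis \<open>p \<in> P\<close> by auto
      ultimately show ?thesis by (intro exI[of _ p] exI[of _ "att p"]) auto
    qed
  qed
  have sub: "adj_rel V E \<subseteq> adj_rel ?V ?E" by (rule adj_rel_mono) auto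
  have toV: "\<exists>v\<in>V. (x, v) \<in> (adj_rel ?V ?E)\<^sup>* \<and> (v, x) \<in> (adj_rel ?V ?E)\<^sup>*" if "x \<in> ?V" for x
  proof (cases "x \<in> V")
    case True then show ?thesis by blast
  next
    case False
    then have "x \<in> P" using that by blast
    then have "(x, att x) \<in> adj_rel ?V ?E" "(att x, x) \<in> adj_rel ?V ?E" using att
      unfolding adj_rel_def by (auto simp: insert_commute)
    then show ?thesis using att \<open>x \<in> P\<close> by blast
  qed
  have cn2: "connected_graph ?V ?E"
    unfolding connected_graph_def
  proof (intro ballI)
    fix x y assume "x \<in> ?V" "y \<in> ?V"
    then obtain a b where ab: "a \<in> V" "b \<in> V" "(x,a) \<in> (adj_rel ?V ?E)\<^sup>*" "(b,y) \<in> (adj_rel ?V ?E)\<^sup>*"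
      using toV by blast
    have "(a,b) \<in> (adj_rel V E)\<^sup>*" using cn ab unfolding connected_graph_def by blast
    then have "(a,b) \<in> (adj_rel ?V ?E)\<^sup>*" using rtrancl_mono[OF sub] by blast
    then show "(x,y) \<in> (adj_rel ?V ?E)\<^sup>*" using ab by (meson rtrancl_trans)
  qed
  have injp: "inj_on (\<lambda>p. {p, att p}) P"
  proof (rule inj_onI)
    fix p q assume pq: "p \<in> P" "q \<in> P" "{p, att p} = {q, att q}"
    have "att p \<in> V" "att q \<in> V" "p \<notin> V" "q \<notin> V" using att dis pq by auto
    then show "p = q" using pq(3) by (metis doubleton_eq_iff)
  qed
  have disE: "E \<inter> (\<lambda>p. {p, att p}) ` P = {}"
  proof -
    { fix p assume "p \<in> P" "{p, att p} \<in> E"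
      then have "p \<in> V" using graph_edge2[OF g] by blast
      then have False using dis \<open>p \<in> P\<close> by blast }
    then show ?thesis by blast
  qed
  have "card ?E = card E + card P"
    using card_Un_disjoint[OF graph_finite_E[OF g] _ disE] fP card_image[OF injp] by simp
  moreover have "card ?V = card V + card P" using card_Un_disjoint[OF fin fP] dis by (simp add: Int_commute)
  ultimately show ?thesis using g2 cn2 ce ne unfolding is_tree_def by auto
qed

lemma tot_tree:
  assumes tX: "is_tree X ET" and tR: "is_tree VR ER"
    and connA: "\<forall>e\<in>ET. \<exists>x y a b. e = {x,y} \<and> conn e = {(x,a),(y,b)} \<and> a \<in> VR \<and> b \<in> VR"
  shows "is_tree (X \<times> VR) ((\<Union>x\<in>X. (\<lambda>e. Pair x ` e) ` ER) \<union> conn ` ET)"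
proof -
  have gX: "graph X ET" and finX: "finite X" and neX: "X \<noteq> {}" and cX: "connected_graph X ET"
    and ceX: "card ET + 1 = card X"
    using tree_facts[OF tX] by auto
  have gR: "graph VR ER" and finR: "finite VR" and neR: "VR \<noteq> {}" and cR: "connected_graph VR ER"
    and ceR: "card ER + 1 = card VR"
    using tree_facts[OF tR] by auto
  let ?L = "\<Union>x\<in>X. (\<lambda>e. Pair x ` e) ` ER"
  let ?E = "?L \<union> conn ` ET"
  let ?V = "X \<times> VR"
  have connf: "\<And>e. e \<in> ET \<Longrightarrow> fst ` conn e = e"
  proof -
    fix e assume "e \<in> ET"
    then have "\<exists>x y a b. e = {x,y} \<and> conn e = {(x,a),(y,b)} \<and> a \<in> VR \<and> b \<in> VR" using connA by (simp only: Ball_def)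
    then obtain x y a b where "e = {x,y}" "conn e = {(x,a),(y,b)}" by (elim exE conjE)
    then show "fst ` conn e = e" by simp
  qed
  have g: "graph ?V ?E"
    unfolding graph_def
  proof (intro conjI ballI)
    show "finite ?V" using finX finR by simp
    fix e assume "e \<in> ?E"
    then show "\<exists>p q. p \<in> ?V \<and> q \<in> ?V \<and> p \<noteq> q \<and> e = {p, q}"
    proof
      assume "e \<in> ?L"
      then obtain x f where "x \<in> X" "f \<in> ER" "e = Pair x ` f" by blast
      moreover obtain a b where "a \<in> VR" "b \<in> VR" "a \<noteq> b" "f = {a,b}" using graph_edge[OF gR \<open>f \<in> ER\<close>] by blast
      ultimately show ?thesis by (intro exI[of _ "(x,a)"] exI[of _ "(x,b)"]) auto
    next
      assume "e \<in> conn ` ET"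
      then obtain f where f: "f \<in> ET" "e = conn f" by blast
      then have "\<exists>x y a b. f = {x,y} \<and> conn f = {(x,a),(y,b)} \<and> a \<in> VR \<and> b \<in> VR" using connA by (simp only: Ball_def)
      then obtain x y a b where xy: "f = {x,y}" "conn f = {(x,a),(y,b)}" "a \<in> VR" "b \<in> VR" by (elim exE conjE)
      have "x \<in> X \<and> y \<in> X \<and> x \<noteq> y" using graph_edge2[OF gX, of x y] f(1) xy(1) by simp
      then have "x \<in> X" "y \<in> X" "x \<noteq> y" by simp_all
      moreover have "e = {(x,a),(y,b)}" using f(2) xy(2) by simp
      ultimately show ?thesis using xy(3,4) by (intro exI[of _ "(x,a)"] exI[of _ "(y,b)"]) simp
    qed
  qed
  have finER: "finite ER" using graph_finite_E[OF gR] .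
  have finET: "finite ET" using graph_finite_E[OF gX] .
  have cardlayer: "card ((\<lambda>e. Pair x ` e) ` ER) = card ER" for x
  proof (rule card_image, rule inj_onI)
    fix e1 e2 assume "Pair x ` e1 = Pair x ` e2"
    moreover have "inj (Pair x)" by (simp add: inj_on_def)
    ultimately show "e1 = e2" by (metis inj_image_eq_iff)
  qed
  have "card ?L = (\<Sum>x\<in>X. card ((\<lambda>e. Pair x ` e) ` ER))"
  proof (rule card_UN_disjoint)
    show "finite X" by (rule finX)
    show "\<forall>i\<in>X. finite ((\<lambda>e. Pair i ` e) ` ER)" using finER by simp
    show "\<forall>i\<in>X. \<forall>j\<in>X. i \<noteq> j \<longrightarrow> (\<lambda>e. Pair i ` e) ` ER \<inter> (\<lambda>e. Pair j ` e) ` ER = {}"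
    proof (intro ballI impI)
      fix i j assume "i \<in> X" "j \<in> X" "i \<noteq> j"
      { fix e1 e2 assume "e1 \<in> ER" "e2 \<in> ER" "Pair i ` e1 = Pair j ` e2"
        obtain a b where "e1 = {a,b}" using graph_edge[OF gR \<open>e1 \<in> ER\<close>] by blast
        then have "(i,a) \<in> Pair j ` e2" using \<open>Pair i ` e1 = Pair j ` e2\<close> by blast
        then have False using \<open>i \<noteq> j\<close> by blast }
      then show "(\<lambda>e. Pair i ` e) ` ER \<inter> (\<lambda>e. Pair j ` e) ` ER = {}" by blast
    qed
  qed
  also have "\<dots> = (\<Sum>x\<in>X. card ER)" by (rule sum.cong) (simp_all only: cardlayer)
  finally have cL: "card ?L = card X * card ER" by simp
  have injc: "inj_on conn ET" by (rule inj_onI) (metis connf)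
  have cC: "card (conn ` ET) = card ET" using card_image[OF injc] .
  have dis: "?L \<inter> conn ` ET = {}"
  proof -
    { fix x f e assume "x \<in> X" "f \<in> ER" "e \<in> ET" "Pair x ` f = conn e"
      then have "fst ` Pair x ` f = e" using connf by metis
      moreover obtain a b where "f = {a,b}" using graph_edge[OF gR \<open>f \<in> ER\<close>] by blast
      ultimately have "e = {x}" by auto
      moreover obtain p q where "p \<noteq> q" "e = {p,q}" using graph_edge[OF gX \<open>e \<in> ET\<close>] by blast
      ultimately have "p \<in> {x}" "q \<in> {x}" by blast+
      then have False using \<open>p \<noteq> q\<close> by simp }
    then show ?thesis by blast
  qed
  have finL: "finite ?L" using finX finER by simp
  have cE: "card ?E = card X * card ER + card ET"
    using card_Un_disjoint[OF finL _ dis] finET cL cC by simp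
  have cV: "card ?V = card X * card VR" by (simp add: card_cartesian_product)
  have cnt: "card ?E + 1 = card ?V"
  proof -
    have e1: "card ?E + 1 = card X * card ER + card X" using cE ceX by simp
    have e2: "card X * card VR = card X * card ER + card X" using ceR[symmetric] by simp
    show ?thesis using e1 e2 cV by simp
  qed
  let ?A = "adj_rel ?V ?E"
  have layer: "((x,a),(x,b)) \<in> ?A\<^sup>*" if "x \<in> X" "a \<in> VR" "b \<in> VR" for x a b
  proof -
    have "(a,b) \<in> (adj_rel VR ER)\<^sup>*" using cR that unfolding connected_graph_def by blast
    then show ?thesis
    proof (induction rule: rtrancl_induct)
      case base then show ?case by simp
    next
      case (step c d)
      then have "{c,d} \<in> ER" "c \<in> VR" "d \<in> VR" unfolding adj_rel_def by auto
      then have "Pair x ` {c,d} \<in> ?E" using \<open>x \<in> X\<close> by blast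
      then have "((x,c),(x,d)) \<in> ?A" using \<open>c \<in> VR\<close> \<open>d \<in> VR\<close> \<open>x \<in> X\<close> unfolding adj_rel_def by auto
      then show ?case using step by (meson rtrancl.rtrancl_into_rtrancl)
    qed
  qed
  have cross: "((x,a),(y,b)) \<in> ?A\<^sup>*" if "(x,y) \<in> adj_rel X ET" "a \<in> VR" "b \<in> VR" for x y a b
  proof -
    have xy: "x \<in> X" "y \<in> X" "{x,y} \<in> ET" using that unfolding adj_rel_def by auto
    then have "\<exists>x' y' a' b'. {x,y} = {x',y'} \<and> conn {x,y} = {(x',a'),(y',b')} \<and> a' \<in> VR \<and> b' \<in> VR" using connA by (simp only: Ball_def)
    then obtain x' y' a' b' where c: "{x,y} = {x',y'}" "conn {x,y} = {(x',a'),(y',b')}" "a' \<in> VR" "b' \<in> VR"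
      by (elim exE conjE)
    have "(x = x' \<and> y = y') \<or> (x = y' \<and> y = x')" using c(1) by (simp add: doubleton_eq_iff)
    then obtain a'' b'' where ab: "a'' \<in> VR" "b'' \<in> VR" "conn {x,y} = {(x,a''),(y,b'')}"
    proof
      assume "x = x' \<and> y = y'" then show ?thesis using c that by blast
    next
      assume "x = y' \<and> y = x'"
      then have "conn {x,y} = {(x,b'),(y,a')}" using c(2) by (simp add: insert_commute)
      then show ?thesis using c that by blast
    qed
    have "conn {x,y} \<in> ?E" using xy by blast
    then have "((x,a''),(y,b'')) \<in> ?A" using ab xy unfolding adj_rel_def by auto
    then show ?thesis using layer[of x a a''] layer[of y b'' b] xy ab that
      by (meson rtrancl.rtrancl_into_rtrancl rtrancl_trans)
  qed
  have cn: "connected_graph ?V ?E"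
    unfolding connected_graph_def
  proof (intro ballI)
    fix p q assume p: "p \<in> ?V" and q: "q \<in> ?V"
    obtain x a y b where pq: "p = (x,a)" "q = (y,b)" "x \<in> X" "a \<in> VR" "y \<in> X" "b \<in> VR" using p q by auto
    have "(x,y) \<in> (adj_rel X ET)\<^sup>*" using cX pq unfolding connected_graph_def by blast
    then have "\<forall>b\<in>VR. ((x,a),(y,b)) \<in> ?A\<^sup>*"
    proof (induction rule: rtrancl_induct)
      case base then show ?case using layer pq by blast
    next
      case (step y z)
      show ?case
      proof
        fix b assume "b \<in> VR"
        have "((x,a),(y,a)) \<in> ?A\<^sup>*" using step.IH pq(4) by blast
        moreover have "((y,a),(z,b)) \<in> ?A\<^sup>*" using cross[OF step.hyps(2) pq(4) \<open>b \<in> VR\<close>] .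
        ultimately show "((x,a),(z,b)) \<in> ?A\<^sup>*" by (rule rtrancl_trans)
      qed
    qed
    then show "(p,q) \<in> ?A\<^sup>*" using pq by blast
  qed
  show ?thesis using g cn cnt neX neR unfolding is_tree_def by auto
qed

lemma crossing:
  assumes "(x,y) \<in> R\<^sup>*" "x \<in> P" "y \<notin> P"
  shows "\<exists>a b. (a,b) \<in> R \<and> a \<in> P \<and> b \<notin> P"
  using assms by (induction rule: rtrancl_induct) auto

lemma single_tree: "is_tree {x} {}"
  unfolding is_tree_def graph_def connected_graph_def by auto

lemma spanning_tree:
  assumes g: "graph V E" and c: "connected_graph V E" and x0: "x0 \<in> V"
  shows "\<exists>ET. ET \<subseteq> E \<and> is_tree V ET"
proof -
  have fin: "finite V" using g unfolding graph_def by blast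
  have main: "\<exists>VT ET. is_tree VT ET \<and> x0 \<in> VT \<and> VT \<subseteq> V \<and> ET \<subseteq> E \<and> m \<le> card VT" if "m \<le> card V" for m
    using that
  proof (induction m)
    case 0
    show ?case using single_tree[of x0] x0 by (intro exI[of _ "{x0}"] exI[of _ "{}"]) auto
  next
    case (Suc m)
    then obtain VT ET where t: "is_tree VT ET" "x0 \<in> VT" "VT \<subseteq> V" "ET \<subseteq> E" "m \<le> card VT" by auto
    show ?case
    proof (cases "VT = V")
      case True then show ?thesis using t Suc.prems by blast
    next
      case False
      then obtain v where v: "v \<in> V" "v \<notin> VT" using t by blast
      have "(x0,v) \<in> (adj_rel V E)\<^sup>*" using c x0 v unfolding connected_graph_def by blast
      then obtain a b where ab: "(a,b) \<in> adj_rel V E" "a \<in> VT" "b \<notin> VT" using crossing t(2) v(2) by metis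
      have abE: "{a,b} \<in> E" "b \<in> V" using ab unfolding adj_rel_def by auto
      have "is_tree (VT \<union> {b}) (ET \<union> (\<lambda>p. {p, a}) ` {b})"
        by (rule leaves_tree[OF t(1)]) (use ab in auto)
      moreover have "card (VT \<union> {b}) = Suc (card VT)"
        using ab(3) finite_subset[OF t(3) fin] by simp
      ultimately show ?thesis using t abE ab by (intro exI[of _ "VT \<union> {b}"] exI[of _ "ET \<union> {{a,b}}"]) (auto simp: insert_commute)
    qed
  qed
  obtain VT ET where t: "is_tree VT ET" "VT \<subseteq> V" "ET \<subseteq> E" "card V \<le> card VT" using main[of "card V"] by auto
  have "VT = V" using card_seteq[OF fin t(2) t(4)] .
  then show ?thesis using t by blast
qed

definition fam :: "'a set \<Rightarrow> 'a set set \<Rightarrow> 'a set \<Rightarrow> nat \<Rightarrow> bool" where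
  "fam V E S m \<longleftrightarrow> (\<exists>T :: nat \<Rightarrow> 'a set \<times> 'a set set.
      (\<forall>i<m. steiner_tree V E S (fst (T i)) (snd (T i))) \<and>
      (\<forall>i<m. \<forall>j<m. i \<noteq> j \<longrightarrow> snd (T i) \<inter> snd (T j) = {}))"

lemma lambda_S_fam: "lambda_S V E S = Max {k. fam V E S k}"
  unfolding lambda_S_def fam_def by simp

lemma fam_mono: "fam V E S m \<Longrightarrow> m' \<le> m \<Longrightarrow> fam V E S m'"
  unfolding fam_def by (meson less_le_trans)

lemma fam_0: "fam V E S 0"
  unfolding fam_def by simp

lemma steiner_edges_ne:
  assumes "steiner_tree V E S VT ET" "finite S" "2 \<le> card S"
  shows "ET \<noteq> {}"
proof
  assume "ET = {}"
  have t: "is_tree VT ET" "S \<subseteq> VT" using assms unfolding steiner_tree_def by auto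
  have "card VT = 1" using tree_facts(5)[OF t(1)] \<open>ET = {}\<close> by simp
  moreover have "card S \<le> card VT" using card_mono[OF tree_facts(2)[OF t(1)] t(2)] .
  ultimately show False using assms(3) by simp
qed

lemma fam_bound:
  assumes g: "graph V E" and S: "finite S" "2 \<le> card S" and f: "fam V E S m"
  shows "m \<le> card E"
proof -
  obtain T where T: "\<forall>i<m. steiner_tree V E S (fst (T i)) (snd (T i))"
    "\<forall>i<m. \<forall>j<m. i \<noteq> j \<longrightarrow> snd (T i) \<inter> snd (T j) = {}" using f unfolding fam_def by blast
  have sub: "(\<Union>i<m. snd (T i)) \<subseteq> E" using T(1) unfolding steiner_tree_def by blast
  have fin: "finite E" using graph_finite_E[OF g] .
  have finT: "\<forall>i\<in>{..<m}. finite (snd (T i))" using sub fin by (meson UN_subset_iff finite_subset lessThan_iff)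
  have "card (\<Union>i<m. snd (T i)) = (\<Sum>i<m. card (snd (T i)))"
    by (rule card_UN_disjoint) (use finT T(2) in auto)
  moreover have "(\<Sum>i<m. card (snd (T i))) \<ge> (\<Sum>i<m. 1)"
  proof (rule sum_mono)
    fix i assume "i \<in> {..<m}"
    then have "snd (T i) \<noteq> {}" "finite (snd (T i))" using steiner_edges_ne[OF _ S] T(1) finT by auto
    then show "1 \<le> card (snd (T i))" by (simp add: Suc_leI card_gt_0_iff)
  qed
  moreover have "card (\<Union>i<m. snd (T i)) \<le> card E" using card_mono[OF fin sub] .
  ultimately show ?thesis by simp
qed

lemma fam_finite:
  assumes "graph V E" "finite S" "2 \<le> card S"
  shows "finite {k. fam V E S k}"
proof (rule finite_subset)
  show "{k. fam V E S k} \<subseteq> {..card E}" using fam_bound[OF assms] by auto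
qed simp

lemma fam_le_lambda:
  assumes "graph V E" "finite S" "2 \<le> card S" "fam V E S m"
  shows "m \<le> lambda_S V E S"
  unfolding lambda_S_fam using fam_finite[OF assms(1-3)] assms(4) by (simp add: Max_ge)

lemma fam_lambda:
  assumes "graph V E" "finite S" "2 \<le> card S"
  shows "fam V E S (lambda_S V E S)"
proof -
  have "{k. fam V E S k} \<noteq> {}" using fam_0 by blast
  then show ?thesis unfolding lambda_S_fam using Max_in[OF fam_finite[OF assms]] by simp
qed

lemma fam_index:
  assumes fin: "finite I"
    and st: "\<forall>i\<in>I. steiner_tree V E S (fst (F i)) (snd (F i))"
    and dj: "\<forall>i\<in>I. \<forall>j\<in>I. i \<noteq> j \<longrightarrow> snd (F i) \<inter> snd (F j) = {}"
  shows "fam V E S (card I)"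
proof -
  obtain h where h: "bij_betw h {0..<card I} I" using ex_bij_betw_nat_finite[OF fin] by blast
  show ?thesis unfolding fam_def
  proof (intro exI[of _ "F \<circ> h"] conjI allI impI)
    fix i assume "i < card I"
    then have "i \<in> {0..<card I}" by simp
    then have "h i \<in> I" using bij_betwE[OF h] by blast
    then show "steiner_tree V E S (fst ((F \<circ> h) i)) (snd ((F \<circ> h) i))" using st by simp
  next
    fix i j assume ij: "i < card I" "j < card I" "i \<noteq> j"
    then have ij': "i \<in> {0..<card I}" "j \<in> {0..<card I}" by simp_all
    then have "h i \<in> I" "h j \<in> I" using bij_betwE[OF h] by blast+
    moreover have "h i \<noteq> h j" using ij' ij(3) bij_betw_imp_inj_on[OF h] by (meson inj_on_eq_iff)
    ultimately show "snd ((F \<circ> h) i) \<inter> snd ((F \<circ> h) j) = {}" using dj by simp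
  qed
qed

lemma lk_fam:
  assumes g: "graph V E" and A: "A \<subseteq> V" "card A = 3"
  shows "fam V E A (lambda_k 3 V E)"
proof (cases "connected_graph V E")
  case False then show ?thesis unfolding lambda_k_def by (simp add: fam_0)
next
  case True
  have finV: "finite V" using g unfolding graph_def by blast
  have finA: "finite A" using A finite_subset finV by blast
  have eq: "{lambda_S V E S |S. S \<subseteq> V \<and> card S = 3} = lambda_S V E ` {S. S \<subseteq> V \<and> card S = 3}" by blast
  have fin: "finite {lambda_S V E S |S. S \<subseteq> V \<and> card S = 3}"
    unfolding eq using finV by simp
  have "lambda_k 3 V E \<le> lambda_S V E A"
    unfolding lambda_k_def using True Min_le[OF fin] A by auto
  then show ?thesis using fam_mono[OF fam_lambda[OF g finA] ] A by simp
qed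

lemma lk_ge:
  assumes g: "graph V E" and c: "connected_graph V E" and cV: "3 \<le> card V"
    and all: "\<forall>S. S \<subseteq> V \<and> card S = 3 \<longrightarrow> fam V E S N"
  shows "N \<le> lambda_k 3 V E"
proof -
  have finV: "finite V" using g unfolding graph_def by blast
  have eq: "{lambda_S V E S |S. S \<subseteq> V \<and> card S = 3} = lambda_S V E ` {S. S \<subseteq> V \<and> card S = 3}" by blast
  have fin: "finite {lambda_S V E S |S. S \<subseteq> V \<and> card S = 3}"
    unfolding eq using finV by simp
  obtain S0 where "S0 \<subseteq> V" "card S0 = 3" using obtain_subset_with_card_n[OF cV] by metis
  then have ne: "{lambda_S V E S |S. S \<subseteq> V \<and> card S = 3} \<noteq> {}" by blast
  have "\<forall>x\<in>{lambda_S V E S |S. S \<subseteq> V \<and> card S = 3}. N \<le> x"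
  proof
    fix x assume "x \<in> {lambda_S V E S |S. S \<subseteq> V \<and> card S = 3}"
    then obtain S where S: "S \<subseteq> V" "card S = 3" "x = lambda_S V E S" by blast
    have "finite S" using S finite_subset finV by blast
    then show "N \<le> x" using fam_le_lambda[OF g] S all by simp
  qed
  then show ?thesis unfolding lambda_k_def using c Min_ge_iff[OF fin ne] by simp
qed

lemma conn_from_fam:
  assumes g: "graph V E" and cV: "3 \<le> card V" and N: "1 \<le> N"
    and all: "\<forall>S. S \<subseteq> V \<and> card S = 3 \<longrightarrow> fam V E S N"
  shows "connected_graph V E"
  unfolding connected_graph_def
proof (intro ballI)
  fix x y assume x: "x \<in> V" and y: "y \<in> V"
  have finV: "finite V" using g unfolding graph_def by blast
  show "(x,y) \<in> (adj_rel V E)\<^sup>*"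
  proof (cases "x = y")
    case True then show ?thesis by simp
  next
    case False
    have "card (V - {x,y}) \<ge> 1" using cV x y False finV by (simp add: card_Diff_subset)
    then obtain z where z: "z \<in> V" "z \<noteq> x" "z \<noteq> y"
      by (metis DiffE all_not_in_conv card.empty insertCI not_one_le_zero)
    let ?S = "{x,y,z}"
    have "card ?S = 3" using False z by simp
    moreover have "?S \<subseteq> V" using x y z by simp
    ultimately have "fam V E ?S N" using all by blast
    then obtain T where "steiner_tree V E ?S (fst (T 0)) (snd (T 0))" using N unfolding fam_def by auto
    then have t: "is_tree (fst (T 0)) (snd (T 0))" "?S \<subseteq> fst (T 0)" "fst (T 0) \<subseteq> V" "snd (T 0) \<subseteq> E"
      unfolding steiner_tree_def by auto
    have "(x,y) \<in> (adj_rel (fst (T 0)) (snd (T 0)))\<^sup>*" using tree_facts(4)[OF t(1)] t(2) unfolding connected_graph_def by auto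
    then show ?thesis using rtrancl_adj_mono[OF t(3,4)] by blast
  qed
qed

lemma extend3:
  assumes fin: "finite V" and cV: "3 \<le> card V" and X: "X \<subseteq> V" "card X \<le> 3"
  shows "\<exists>A. X \<subseteq> A \<and> A \<subseteq> V \<and> card A = 3"
proof -
  have finX: "finite X" using X fin finite_subset by blast
  have "3 - card X \<le> card (V - X)" using cV X fin by (simp add: card_Diff_subset finX)
  then obtain T where T: "T \<subseteq> V - X" "card T = 3 - card X" "finite T" using obtain_subset_with_card_n by metis
  have "X \<inter> T = {}" using T by blast
  then have "card (X \<union> T) = card X + card T" using T finX by (simp add: card_Un_disjoint)
  then show ?thesis using T X by (intro exI[of _ "X \<union> T"]) auto
qed

lemma lexI_G: "{u,u'} \<in> EG \<Longrightarrow> u \<in> VG \<Longrightarrow> u' \<in> VG \<Longrightarrow> v \<in> VH \<Longrightarrow> v' \<in> VH \<Longrightarrow>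
    {(u,v),(u',v')} \<in> lex_edges VG EG VH EH"
  unfolding lex_edges_def by blast

lemma lexI_H: "u \<in> VG \<Longrightarrow> {v,v'} \<in> EH \<Longrightarrow> v \<in> VH \<Longrightarrow> v' \<in> VH \<Longrightarrow>
    {(u,v),(u,v')} \<in> lex_edges VG EG VH EH"
  unfolding lex_edges_def by blast

definition cV :: "('a \<times> 'b) set \<Rightarrow> ('a \<Rightarrow> 'b \<Rightarrow> 'b) \<Rightarrow> 'a set \<Rightarrow> 'b \<Rightarrow> ('a \<times> 'b) set" where
  "cV S \<sigma> X j = (\<lambda>x. (x, \<sigma> x j)) ` X \<union> {s\<in>S. \<sigma> (fst s) j \<noteq> snd s}"

definition cE :: "('a \<times> 'b) set \<Rightarrow> ('a \<Rightarrow> 'b \<Rightarrow> 'b) \<Rightarrow> ('a \<Rightarrow> 'a) \<Rightarrow> 'a set set \<Rightarrow> 'b \<Rightarrow> ('a \<times> 'b) set set" where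
  "cE S \<sigma> w E j = (\<lambda>e. (\<lambda>x. (x, \<sigma> x j)) ` e) ` E \<union>
     (\<lambda>s. {s, (w (fst s), \<sigma> (w (fst s)) j)}) ` {s\<in>S. \<sigma> (fst s) j \<noteq> snd s}"

locale copyset =
  fixes VG :: "'a set" and EG and VH :: "'b set" and EH S X E \<sigma> w
  assumes gG: "graph VG EG" and gH: "graph VH EH"
    and t: "is_tree X E" and XG: "X \<subseteq> VG" and EGs: "E \<subseteq> EG"
    and SS: "S \<subseteq> VG \<times> VH" and finS: "finite S" and SX: "fst ` S \<subseteq> X"
    and wE: "\<forall>x\<in>fst ` S. {x, w x} \<in> E"
    and sig: "\<forall>x\<in>X. bij_betw (\<sigma> x) VH VH"
begin

lemma gX: "graph X E" using tree_facts[OF t] by simp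

lemma wX: "x \<in> fst ` S \<Longrightarrow> w x \<in> X \<and> w x \<noteq> x"
proof -
  assume "x \<in> fst ` S"
  then have "{x, w x} \<in> E" using wE by blast
  then show ?thesis using graph_edge2[OF gX, of x "w x"] by auto
qed

lemma sigV: "x \<in> X \<Longrightarrow> j \<in> VH \<Longrightarrow> \<sigma> x j \<in> VH"
  using sig bij_betwE by blast

lemma sig_inj: "x \<in> X \<Longrightarrow> j \<in> VH \<Longrightarrow> j' \<in> VH \<Longrightarrow> \<sigma> x j = \<sigma> x j' \<Longrightarrow> j = j'"
  using sig unfolding bij_betw_def inj_on_def by blast

lemma copy_steiner:
  assumes j: "j \<in> VH"
  shows "steiner_tree (VG \<times> VH) (lex_edges VG EG VH EH) S (cV S \<sigma> X j) (cE S \<sigma> w E j)"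
proof -
  let ?f = "\<lambda>x. (x, \<sigma> x j)"
  let ?P = "{s\<in>S. \<sigma> (fst s) j \<noteq> snd s}"
  let ?att = "\<lambda>s. ?f (w (fst s))"
  have inj: "inj_on ?f X" by (rule inj_onI) simp
  have t1: "is_tree (?f ` X) ((\<lambda>e. ?f ` e) ` E)" using image_tree[OF t inj] .
  have dis: "?P \<inter> ?f ` X = {}" by auto
  have att: "\<forall>p\<in>?P. ?att p \<in> ?f ` X" using wX by auto
  have finP: "finite ?P" using finS by simp
  have t2: "is_tree (?f ` X \<union> ?P) ((\<lambda>e. ?f ` e) ` E \<union> (\<lambda>p. {p, ?att p}) ` ?P)"
    using leaves_tree[OF t1 finP dis att] .
  have tt: "is_tree (cV S \<sigma> X j) (cE S \<sigma> w E j)" using t2 unfolding cV_def cE_def by simp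
  have sub1: "S \<subseteq> cV S \<sigma> X j"
  proof
    fix s assume s: "s \<in> S"
    show "s \<in> cV S \<sigma> X j"
    proof (cases "\<sigma> (fst s) j = snd s")
      case True
      then have "s = ?f (fst s)" by (metis prod.collapse)
      moreover have "fst s \<in> X" using SX s by blast
      ultimately show ?thesis unfolding cV_def by blast
    next
      case False then show ?thesis unfolding cV_def using s by blast
    qed
  qed
  have sub2: "cV S \<sigma> X j \<subseteq> VG \<times> VH"
    unfolding cV_def using XG SS sigV j by auto
  have sub3: "cE S \<sigma> w E j \<subseteq> lex_edges VG EG VH EH"
  proof
    fix e assume "e \<in> cE S \<sigma> w E j"
    then consider (a) e' where "e' \<in> E" "e = ?f ` e'" | (b) s where "s \<in> ?P" "e = {s, ?att s}"
      unfolding cE_def by blast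
    then show "e \<in> lex_edges VG EG VH EH"
    proof cases
      case a
      then obtain x y where xy: "x \<in> X" "y \<in> X" "e' = {x,y}" using graph_edge[OF gX] by blast
      then have "{x,y} \<in> EG" using a EGs by blast
      moreover have "e = {(x, \<sigma> x j), (y, \<sigma> y j)}" using a xy by simp
      moreover have "x \<in> VG" "y \<in> VG" using xy XG by auto
      moreover have "\<sigma> x j \<in> VH" "\<sigma> y j \<in> VH" using xy sigV j by auto
      ultimately show ?thesis using lexI_G by metis
    next
      case b
      then have s: "s \<in> S" by simp
      obtain u v where uv: "s = (u,v)" by fastforce
      have u: "u \<in> fst ` S" using s uv by force
      have "{u, w u} \<in> EG" using wE EGs u by blast
      moreover have "u \<in> VG" "v \<in> VH" using SS s uv by auto
      moreover have "w u \<in> VG" "\<sigma> (w u) j \<in> VH" using wX[OF u] XG sigV j by auto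
      moreover have "e = {(u,v), (w u, \<sigma> (w u) j)}" using b uv by simp
      ultimately show ?thesis using lexI_G by metis
    qed
  qed
  show ?thesis unfolding steiner_tree_def using tt sub1 sub2 sub3 by simp
qed

lemma copy_proj: "e \<in> cE S \<sigma> w E j \<Longrightarrow> fst ` e \<in> E"
proof -
  assume "e \<in> cE S \<sigma> w E j"
  then consider (a) e' where "e' \<in> E" "e = (\<lambda>x. (x, \<sigma> x j)) ` e'"
    | (b) s where "s \<in> S" "e = {s, (w (fst s), \<sigma> (w (fst s)) j)}"
    unfolding cE_def by blast
  then show ?thesis
  proof cases
    case a
    have "fst ` e = e'" unfolding a(2) by (simp add: image_image)
    then show ?thesis using a by simp
  next
    case b
    have "fst ` e = {fst s, w (fst s)}" using b by simp
    then show ?thesis using wE b by simp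
  qed
qed

lemma copy_rep:
  assumes "e \<in> cE S \<sigma> w E j"
  shows "\<exists>x\<in>X. \<exists>q. e = {(x, \<sigma> x j), q} \<and>
     ((\<exists>y\<in>X. q = (y, \<sigma> y j)) \<or> (q \<in> S \<and> x = w (fst q)))"
proof -
  from assms consider (a) e' where "e' \<in> E" "e = (\<lambda>x. (x, \<sigma> x j)) ` e'"
    | (b) s where "s \<in> S" "e = {s, (w (fst s), \<sigma> (w (fst s)) j)}"
    unfolding cE_def by blast
  then show ?thesis
  proof cases
    case a
    then obtain x y where xy: "x \<in> X" "y \<in> X" "e' = {x,y}" using graph_edge[OF gX] by blast
    then show ?thesis using a by auto
  next
    case b
    have "w (fst s) \<in> X" using wX b by blast
    then show ?thesis using b by (intro bexI[of _ "w (fst s)"] exI[of _ s]) (auto simp: insert_commute)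
  qed
qed

lemma copy_vs_conn:
  assumes xy: "x \<noteq> y"
    and g1: "(x,a) \<in> S \<longrightarrow> w x \<noteq> y" and g2: "(y,b) \<in> S \<longrightarrow> w y \<noteq> x"
    and g3: "\<not> (\<sigma> x j = a \<and> \<sigma> y j = b)"
  shows "{(x,a),(y,b)} \<notin> cE S \<sigma> w E j"
proof
  assume "{(x,a),(y,b)} \<in> cE S \<sigma> w E j"
  then consider (a) e' where "e' \<in> E" "{(x,a),(y,b)} = (\<lambda>x. (x, \<sigma> x j)) ` e'"
    | (b) s where "s \<in> S" "{(x,a),(y,b)} = {s, (w (fst s), \<sigma> (w (fst s)) j)}"
    unfolding cE_def by blast
  then show False
  proof cases
    case a
    then obtain z z' where "e' = {z,z'}" using graph_edge[OF gX] by blast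
    then have "{(x,a),(y,b)} = {(z, \<sigma> z j), (z', \<sigma> z' j)}" using a by simp
    then have "((x,a) = (z, \<sigma> z j) \<and> (y,b) = (z', \<sigma> z' j)) \<or> ((x,a) = (z', \<sigma> z' j) \<and> (y,b) = (z, \<sigma> z j))"
      unfolding doubleton_eq_iff by blast
    then show False using g3 by auto
  next
    case b
    then have "((x,a) = s \<and> (y,b) = (w (fst s), \<sigma> (w (fst s)) j)) \<or> ((x,a) = (w (fst s), \<sigma> (w (fst s)) j) \<and> (y,b) = s)"
      unfolding doubleton_eq_iff by blast
    then show False using g1 g2 b(1) by auto
  qed
qed

lemma copy_disj:
  assumes j: "j \<in> VH" and j': "j' \<in> VH" and jj: "j \<noteq> j'"
    and R: "\<forall>s\<in>S. \<forall>s'\<in>S. \<forall>j\<in>VH. \<forall>j'\<in>VH. w (fst s) = fst s' \<longrightarrow> w (fst s') = fst s \<longrightarrow>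
             \<sigma> (fst s) j' = snd s \<longrightarrow> \<sigma> (fst s') j = snd s' \<longrightarrow> j = j'"
  shows "cE S \<sigma> w E j \<inter> cE S \<sigma> w E j' = {}"
proof (rule ccontr)
  assume "cE S \<sigma> w E j \<inter> cE S \<sigma> w E j' \<noteq> {}"
  then obtain e where e: "e \<in> cE S \<sigma> w E j" "e \<in> cE S \<sigma> w E j'" by blast
  obtain x q where xq: "x \<in> X" "e = {(x, \<sigma> x j), q}"
    "(\<exists>y\<in>X. q = (y, \<sigma> y j)) \<or> (q \<in> S \<and> x = w (fst q))" using copy_rep[OF e(1)] by blast
  obtain x' q' where xq': "x' \<in> X" "e = {(x', \<sigma> x' j'), q'}"
    "(\<exists>y\<in>X. q' = (y, \<sigma> y j')) \<or> (q' \<in> S \<and> x' = w (fst q'))" using copy_rep[OF e(2)] by blast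
  have "((x, \<sigma> x j) = (x', \<sigma> x' j') \<and> q = q') \<or> ((x, \<sigma> x j) = q' \<and> q = (x', \<sigma> x' j'))"
  proof -
    have "{(x, \<sigma> x j), q} = {(x', \<sigma> x' j'), q'}" using xq(2) xq'(2) by simp
    then show ?thesis unfolding doubleton_eq_iff by blast
  qed
  then show False
  proof
    assume "(x, \<sigma> x j) = (x', \<sigma> x' j') \<and> q = q'"
    then have "x = x'" "\<sigma> x j = \<sigma> x j'" by auto
    then show False using sig_inj[OF xq(1) j j'] jj by simp
  next
    assume h: "(x, \<sigma> x j) = q' \<and> q = (x', \<sigma> x' j')"
    show False
    proof (cases "\<exists>y\<in>X. q = (y, \<sigma> y j)")
      case True
      then obtain y where "y \<in> X" "q = (y, \<sigma> y j)" by blast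
      then have "y = x'" "\<sigma> y j = \<sigma> y j'" using h by auto
      then show False using sig_inj[OF \<open>y \<in> X\<close> j j'] jj by simp
    next
      case False
      then have q: "q \<in> S" "x = w (fst q)" using xq(3) by blast+
      show False
      proof (cases "\<exists>y\<in>X. q' = (y, \<sigma> y j')")
        case True
        then obtain y where "y \<in> X" "q' = (y, \<sigma> y j')" by blast
        then have "y = x" "\<sigma> y j = \<sigma> y j'" using h by auto
        then show False using sig_inj[OF \<open>y \<in> X\<close> j j'] jj by simp
      next
        case False
        then have q': "q' \<in> S" "x' = w (fst q')" using xq'(3) by blast+
        have f: "fst q = x'" "snd q = \<sigma> x' j'" "fst q' = x" "snd q' = \<sigma> x j" using h by auto
        have h1: "w (fst q) = fst q'" "w (fst q') = fst q" "\<sigma> (fst q) j' = snd q" "\<sigma> (fst q') j = snd q'"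
          using f q q' by simp_all
        have "j = j'" using R[rule_format, OF q(1) q'(1) j j'] h1 by blast
        then show False using jj by simp
      qed
    qed
  qed
qed

end

lemma edge_not_single: "graph V E \<Longrightarrow> e \<in> E \<Longrightarrow> e \<noteq> {x}"
proof
  assume g: "graph V E" "e \<in> E" "e = {x}"
  then obtain a b where "a \<noteq> b" "e = {a,b}" using graph_edge by blast
  then have "a \<in> {x}" "b \<in> {x}" using g(3) by blast+
  then show False using \<open>a \<noteq> b\<close> by simp
qed

locale setting =
  fixes VG :: "'a set" and EG and VH :: "'b set" and EH and S :: "('a \<times> 'b) set"
    and k :: nat and TV TE and l :: nat and RV RE and B :: "'b set"
  assumes gG: "graph VG EG" and gH: "graph VH EH"
    and SS: "S \<subseteq> VG \<times> VH" and cS: "card S = 3"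
    and TG: "\<forall>t<k. is_tree (TV t) (TE t) \<and> TV t \<subseteq> VG \<and> TE t \<subseteq> EG \<and> fst ` S \<subseteq> TV t"
    and Tdisj: "\<forall>t<k. \<forall>t'<k. t \<noteq> t' \<longrightarrow> TE t \<inter> TE t' = {}"
    and RH: "\<forall>p<l. is_tree (RV p) (RE p) \<and> RV p \<subseteq> VH \<and> RE p \<subseteq> EH \<and> B \<subseteq> RV p"
    and Rdisj: "\<forall>p<l. \<forall>p'<l. p \<noteq> p' \<longrightarrow> RE p \<inter> RE p' = {}"
    and SB: "snd ` S \<subseteq> B" and BH: "B \<subseteq> VH" and cB: "card B = 3"
    and cT: "\<forall>t<k. 3 \<le> card (TV t)" and k0: "0 < k"
begin

lemma finS: "finite S" using cS by (metis card.infinite zero_neq_numeral)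

lemma finH: "finite VH" using gH unfolding graph_def by blast

lemma gT: "t < k \<Longrightarrow> graph (TV t) (TE t)" using TG tree_facts by blast

lemma gR: "p < l \<Longrightarrow> graph (RV p) (RE p)" using RH tree_facts by blast

definition good_copies where
  "good_copies \<sigma> w \<longleftrightarrow> (\<forall>t<k. (\<forall>x\<in>fst ` S. {x, w t x} \<in> TE t) \<and> (\<forall>x\<in>TV t. bij_betw (\<sigma> t x) VH VH) \<and>
     (\<forall>s\<in>S. \<forall>s'\<in>S. \<forall>j\<in>VH. \<forall>j'\<in>VH. w t (fst s) = fst s' \<longrightarrow> w t (fst s') = fst s \<longrightarrow>
             \<sigma> t (fst s) j' = snd s \<longrightarrow> \<sigma> t (fst s') j = snd s' \<longrightarrow> j = j'))"

lemma copyset_t: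
  assumes "good_copies \<sigma> w" "t < k"
  shows "copyset VG EG VH EH S (TV t) (TE t) (\<sigma> t) (w t)"
proof -
  have T: "is_tree (TV t) (TE t)" "TV t \<subseteq> VG" "TE t \<subseteq> EG" "fst ` S \<subseteq> TV t" using TG assms(2) by auto
  have G: "\<forall>x\<in>fst ` S. {x, w t x} \<in> TE t" "\<forall>x\<in>TV t. bij_betw (\<sigma> t x) VH VH"
    using assms unfolding good_copies_def by auto
  show ?thesis unfolding copyset_def using T G gG gH SS finS by (intro conjI)
qed

lemma assemble:
  assumes gc: "good_copies \<sigma> w"
    and Xst: "\<forall>p<l. steiner_tree (VG \<times> VH) (lex_edges VG EG VH EH) S (XV p) (XE p)"
    and Xdisj: "\<forall>p<l. \<forall>p'<l. p \<noteq> p' \<longrightarrow> XE p \<inter> XE p' = {}"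
    and cross: "\<forall>t<k. \<forall>j\<in>VH. \<forall>p<l. cE S (\<sigma> t) (w t) (TE t) j \<inter> XE p = {}"
  shows "fam (VG \<times> VH) (lex_edges VG EG VH EH) S (k * card VH + l)"
proof -
  let ?I = "Inl ` ({..<k} \<times> VH) \<union> Inr ` {..<l}"
  let ?F = "case_sum (\<lambda>(t,j). (cV S (\<sigma> t) (TV t) j, cE S (\<sigma> t) (w t) (TE t) j)) (\<lambda>p. (XV p, XE p))"
  have finI: "finite ?I" using finH by simp
  have cI: "card ?I = k * card VH + l"
  proof -
    have "card (Inl ` ({..<k} \<times> VH) :: (nat \<times> 'b + nat) set) = k * card VH"
      by (simp add: card_image card_cartesian_product)
    moreover have "card (Inr ` {..<l} :: (nat \<times> 'b + nat) set) = l" by (simp add: card_image)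
    moreover have "Inl ` ({..<k} \<times> VH) \<inter> (Inr ` {..<l} :: (nat \<times> 'b + nat) set) = {}" by blast
    ultimately show ?thesis using finH by (simp add: card_Un_disjoint)
  qed
  have st: "\<forall>i\<in>?I. steiner_tree (VG \<times> VH) (lex_edges VG EG VH EH) S (fst (?F i)) (snd (?F i))"
  proof
    fix i assume "i \<in> ?I"
    then consider (a) t j where "t < k" "j \<in> VH" "i = Inl (t,j)" | (b) p where "p < l" "i = Inr p" by blast
    then show "steiner_tree (VG \<times> VH) (lex_edges VG EG VH EH) S (fst (?F i)) (snd (?F i))"
    proof cases
      case a
      interpret c: copyset VG EG VH EH S "TV t" "TE t" "\<sigma> t" "w t" using copyset_t[OF gc a(1)] .
      show ?thesis using c.copy_steiner[OF a(2)] a(3) by simp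
    next
      case b then show ?thesis using Xst by simp
    qed
  qed
  have dj: "\<forall>i\<in>?I. \<forall>i'\<in>?I. i \<noteq> i' \<longrightarrow> snd (?F i) \<inter> snd (?F i') = {}"
  proof (intro ballI impI)
    fix i i' assume i: "i \<in> ?I" and i': "i' \<in> ?I" and ne: "i \<noteq> i'"
    have cc: "cE S (\<sigma> t) (w t) (TE t) j \<inter> cE S (\<sigma> t') (w t') (TE t') j' = {}"
      if "t < k" "t' < k" "j \<in> VH" "j' \<in> VH" "(t,j) \<noteq> (t',j')" for t t' j j'
    proof (cases "t = t'")
      case True
      interpret c: copyset VG EG VH EH S "TV t" "TE t" "\<sigma> t" "w t" using copyset_t[OF gc that(1)] .
      have R: "\<forall>s\<in>S. \<forall>s'\<in>S. \<forall>j\<in>VH. \<forall>j'\<in>VH. w t (fst s) = fst s' \<longrightarrow> w t (fst s') = fst s \<longrightarrow>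
             \<sigma> t (fst s) j' = snd s \<longrightarrow> \<sigma> t (fst s') j = snd s' \<longrightarrow> j = j'"
        using gc that(1) unfolding good_copies_def by blast
      show ?thesis using c.copy_disj[OF that(3,4) _ R] True that(5) by simp
    next
      case False
      interpret c: copyset VG EG VH EH S "TV t" "TE t" "\<sigma> t" "w t" using copyset_t[OF gc that(1)] .
      interpret c': copyset VG EG VH EH S "TV t'" "TE t'" "\<sigma> t'" "w t'" using copyset_t[OF gc that(2)] .
      show ?thesis using c.copy_proj c'.copy_proj Tdisj that(1,2) False by blast
    qed
    from i consider (a) t j where "t < k" "j \<in> VH" "i = Inl (t,j)" | (b) p where "p < l" "i = Inr p" by blast
    then show "snd (?F i) \<inter> snd (?F i') = {}"
    proof cases
      case a
      from i' consider (a') t' j' where "t' < k" "j' \<in> VH" "i' = Inl (t',j')" | (b') p' where "p' < l" "i' = Inr p'" by blast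
      then show ?thesis
      proof cases
        case a'
        then have "(t,j) \<noteq> (t',j')" using a ne by auto
        then show ?thesis using cc[OF a(1) a'(1) a(2) a'(2)] a a' by simp
      next
        case b'
        then show ?thesis using cross a by simp
      qed
    next
      case b
      from i' consider (a') t' j' where "t' < k" "j' \<in> VH" "i' = Inl (t',j')" | (b') p' where "p' < l" "i' = Inr p'" by blast
      then show ?thesis
      proof cases
        case a'
        then show ?thesis using cross b by (simp add: Int_commute)
      next
        case b'
        then have "p \<noteq> p'" using b ne by auto
        then show ?thesis using Xdisj b b' by simp
      qed
    qed
  qed
  show ?thesis using fam_index[OF finI st dj] cI by simp
qed

lemma single_proj_disj:
  assumes gc: "good_copies \<sigma> w" and t: "t < k" and sp: "\<forall>e\<in>X. \<exists>x. fst ` e = {x}"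
  shows "cE S (\<sigma> t) (w t) (TE t) j \<inter> X = {}"
proof -
  interpret c: copyset VG EG VH EH S "TV t" "TE t" "\<sigma> t" "w t" using copyset_t[OF gc t] .
  { fix e assume "e \<in> cE S (\<sigma> t) (w t) (TE t) j" "e \<in> X"
    then have "fst ` e \<in> TE t" "\<exists>x. fst ` e = {x}" using c.copy_proj sp by blast+
    then have False using edge_not_single[OF gT[OF t]] by metis }
  then show ?thesis by blast
qed

end

context setting begin

lemma extras_layer:
  assumes u: "fst ` S \<subseteq> {u}" and uG: "u \<in> VG"
  shows "\<forall>p<l. steiner_tree (VG \<times> VH) (lex_edges VG EG VH EH) S (Pair u ` RV p) ((\<lambda>e. Pair u ` e) ` RE p)"
    and "\<forall>p<l. \<forall>p'<l. p \<noteq> p' \<longrightarrow> (\<lambda>e. Pair u ` e) ` RE p \<inter> (\<lambda>e. Pair u ` e) ` RE p' = {}"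
    and "\<forall>p<l. \<forall>e\<in>(\<lambda>e. Pair u ` e) ` RE p. \<exists>x. fst ` e = {x}"
proof -
  have injP: "inj (Pair u)" by (simp add: inj_on_def)
  show "\<forall>p<l. steiner_tree (VG \<times> VH) (lex_edges VG EG VH EH) S (Pair u ` RV p) ((\<lambda>e. Pair u ` e) ` RE p)"
  proof (intro allI impI)
    fix p assume p: "p < l"
    have R: "is_tree (RV p) (RE p)" "RV p \<subseteq> VH" "RE p \<subseteq> EH" "B \<subseteq> RV p" using RH p by auto
    have t: "is_tree (Pair u ` RV p) ((\<lambda>e. Pair u ` e) ` RE p)"
    proof -
      have "inj_on (Pair u) (RV p)" by (simp add: inj_on_def)
      from image_tree[OF R(1) this] show ?thesis .
    qed
    have s1: "S \<subseteq> Pair u ` RV p"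
    proof
      fix s assume "s \<in> S"
      then have "fst s = u" "snd s \<in> RV p" using u SB R(4) by auto
      then show "s \<in> Pair u ` RV p" by (metis imageI prod.collapse)
    qed
    have s2: "Pair u ` RV p \<subseteq> VG \<times> VH" using uG R(2) by auto
    have s3: "(\<lambda>e. Pair u ` e) ` RE p \<subseteq> lex_edges VG EG VH EH"
    proof
      fix e assume "e \<in> (\<lambda>e. Pair u ` e) ` RE p"
      then obtain r where r: "r \<in> RE p" "e = Pair u ` r" by blast
      then obtain a b where ab: "a \<in> RV p" "b \<in> RV p" "r = {a,b}" using graph_edge[OF gR[OF p]] by blast
      then have "{a,b} \<in> EH" using R(3) r by blast
      moreover have "a \<in> VH" "b \<in> VH" using ab R(2) by auto
      moreover have "e = {(u,a),(u,b)}" using r ab by simp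
      ultimately show "e \<in> lex_edges VG EG VH EH" using lexI_H[OF uG] by metis
    qed
    show "steiner_tree (VG \<times> VH) (lex_edges VG EG VH EH) S (Pair u ` RV p) ((\<lambda>e. Pair u ` e) ` RE p)"
      unfolding steiner_tree_def using t s1 s2 s3 by simp
  qed
  show "\<forall>p<l. \<forall>p'<l. p \<noteq> p' \<longrightarrow> (\<lambda>e. Pair u ` e) ` RE p \<inter> (\<lambda>e. Pair u ` e) ` RE p' = {}"
  proof (intro allI impI)
    fix p p' assume pp: "p < l" "p' < l" "p \<noteq> p'"
    { fix r r' assume "r \<in> RE p" "r' \<in> RE p'" "Pair u ` r = Pair u ` r'"
      then have "r = r'" using injP by (metis inj_image_eq_iff)
      then have False using Rdisj pp \<open>r \<in> RE p\<close> \<open>r' \<in> RE p'\<close> by blast }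
    then show "(\<lambda>e. Pair u ` e) ` RE p \<inter> (\<lambda>e. Pair u ` e) ` RE p' = {}" by blast
  qed
  show "\<forall>p<l. \<forall>e\<in>(\<lambda>e. Pair u ` e) ` RE p. \<exists>x. fst ` e = {x}"
  proof (intro allI impI ballI)
    fix p e assume p: "p < l" and "e \<in> (\<lambda>e. Pair u ` e) ` RE p"
    then obtain r where r: "r \<in> RE p" "e = Pair u ` r" by blast
    then obtain a b where "r = {a,b}" using graph_edge[OF gR[OF p]] by blast
    then show "\<exists>x. fst ` e = {x}" using r by auto
  qed
qed

definition tE where
  "tE ex ey f \<alpha> nb p = (\<Union>x\<in>TV 0. (\<lambda>e. Pair x ` e) ` RE p) \<union>
      (\<lambda>e. {(ex e, \<alpha> p e), (ey e, nb p (f e))}) ` TE 0"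

lemma extras_tot:
  assumes k0: "0 < k"
    and exy: "\<forall>e\<in>TE 0. e = {ex e, ey e}"
    and fB: "\<forall>e\<in>TE 0. f e \<in> B"
    and nbR: "\<forall>p<l. \<forall>b\<in>B. {b, nb p b} \<in> RE p"
    and aR: "\<forall>p<l. \<forall>e\<in>TE 0. \<alpha> p e \<in> RV p"
  shows "\<forall>p<l. steiner_tree (VG \<times> VH) (lex_edges VG EG VH EH) S (TV 0 \<times> RV p) (tE ex ey f \<alpha> nb p)"
    and "\<forall>p<l. \<forall>p'<l. p \<noteq> p' \<longrightarrow> tE ex ey f \<alpha> nb p \<inter> tE ex ey f \<alpha> nb p' = {}"
proof -
  have T0: "is_tree (TV 0) (TE 0)" "TV 0 \<subseteq> VG" "TE 0 \<subseteq> EG" "fst ` S \<subseteq> TV 0" using TG k0 by auto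
  have g0: "graph (TV 0) (TE 0)" using gT k0 by blast
  have exy2: "ex e \<noteq> ey e" "ex e \<in> TV 0" "ey e \<in> TV 0" if "e \<in> TE 0" for e
    using graph_edge2[OF g0, of "ex e" "ey e"] exy that by auto
  have nbV: "nb p b \<in> RV p" if "p < l" "b \<in> B" for p b
    using graph_edge2[OF gR[OF that(1)], of b "nb p b"] nbR that by auto
  have connf: "fst ` {(ex e, \<alpha> p e), (ey e, nb p (f e))} = e" if "e \<in> TE 0" for e p
    using exy that by simp
  show "\<forall>p<l. steiner_tree (VG \<times> VH) (lex_edges VG EG VH EH) S (TV 0 \<times> RV p) (tE ex ey f \<alpha> nb p)"
  proof (intro allI impI)
    fix p assume p: "p < l"
    have R: "is_tree (RV p) (RE p)" "RV p \<subseteq> VH" "RE p \<subseteq> EH" "B \<subseteq> RV p" using RH p by auto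
    have cn: "\<forall>e\<in>TE 0. \<exists>x y a b. e = {x,y} \<and> (\<lambda>e. {(ex e, \<alpha> p e), (ey e, nb p (f e))}) e = {(x,a),(y,b)} \<and> a \<in> RV p \<and> b \<in> RV p"
    proof
      fix e assume e: "e \<in> TE 0"
      show "\<exists>x y a b. e = {x,y} \<and> (\<lambda>e. {(ex e, \<alpha> p e), (ey e, nb p (f e))}) e = {(x,a),(y,b)} \<and> a \<in> RV p \<and> b \<in> RV p"
      proof (intro exI conjI)
        show "e = {ex e, ey e}" using exy e by blast
        show "(\<lambda>e. {(ex e, \<alpha> p e), (ey e, nb p (f e))}) e = {(ex e, \<alpha> p e), (ey e, nb p (f e))}" by simp
        show "\<alpha> p e \<in> RV p" using aR p e by blast
        show "nb p (f e) \<in> RV p" using nbV[OF p] fB e by blast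
      qed
    qed
    have t: "is_tree (TV 0 \<times> RV p) (tE ex ey f \<alpha> nb p)"
      unfolding tE_def using tot_tree[OF T0(1) R(1) cn] .
    have s1: "S \<subseteq> TV 0 \<times> RV p" using T0(4) SB R(4) by force
    have s2: "TV 0 \<times> RV p \<subseteq> VG \<times> VH" using T0(2) R(2) by auto
    have s3: "tE ex ey f \<alpha> nb p \<subseteq> lex_edges VG EG VH EH"
    proof
      fix e assume "e \<in> tE ex ey f \<alpha> nb p"
      then consider (a) x r where "x \<in> TV 0" "r \<in> RE p" "e = Pair x ` r"
        | (b) e' where "e' \<in> TE 0" "e = {(ex e', \<alpha> p e'), (ey e', nb p (f e'))}"
        unfolding tE_def by blast
      then show "e \<in> lex_edges VG EG VH EH"
      proof cases
        case a
        then obtain c d where cd: "c \<in> RV p" "d \<in> RV p" "r = {c,d}" using graph_edge[OF gR[OF p]] by blast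
        then have "{c,d} \<in> EH" using R(3) a by blast
        moreover have "x \<in> VG" using a T0(2) by blast
        moreover have "c \<in> VH" "d \<in> VH" using cd R(2) by auto
        moreover have "e = {(x,c),(x,d)}" using a cd by simp
        ultimately show ?thesis using lexI_H by metis
      next
        case b
        have "{ex e', ey e'} \<in> EG" using b exy T0(3) by auto
        moreover have "ex e' \<in> VG" "ey e' \<in> VG" using exy2[OF b(1)] T0(2) by auto
        moreover have "\<alpha> p e' \<in> VH" "nb p (f e') \<in> VH" using aR p b(1) nbV[OF p] fB R(2) by auto
        ultimately show ?thesis using lexI_G b(2) by metis
      qed
    qed
    show "steiner_tree (VG \<times> VH) (lex_edges VG EG VH EH) S (TV 0 \<times> RV p) (tE ex ey f \<alpha> nb p)"
      unfolding steiner_tree_def using t s1 s2 s3 by simp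
  qed
  show "\<forall>p<l. \<forall>p'<l. p \<noteq> p' \<longrightarrow> tE ex ey f \<alpha> nb p \<inter> tE ex ey f \<alpha> nb p' = {}"
  proof (intro allI impI)
    fix p p' assume pp: "p < l" "p' < l" "p \<noteq> p'"
    have injP: "inj (Pair x)" for x :: 'a by (simp add: inj_on_def)
    show "tE ex ey f \<alpha> nb p \<inter> tE ex ey f \<alpha> nb p' = {}"
    proof (rule ccontr)
      assume "tE ex ey f \<alpha> nb p \<inter> tE ex ey f \<alpha> nb p' \<noteq> {}"
      then obtain e where e: "e \<in> tE ex ey f \<alpha> nb p" "e \<in> tE ex ey f \<alpha> nb p'" by blast
      from e(1) consider (a) x r where "x \<in> TV 0" "r \<in> RE p" "e = Pair x ` r"
        | (b) e1 where "e1 \<in> TE 0" "e = {(ex e1, \<alpha> p e1), (ey e1, nb p (f e1))}"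
        unfolding tE_def by blast
      then show False
      proof cases
        case a
        obtain c d where "r = {c,d}" using graph_edge[OF gR[OF pp(1)]] a by blast
        then have fe: "fst ` e = {x}" using a by auto
        from e(2) consider (a') x' r' where "x' \<in> TV 0" "r' \<in> RE p'" "e = Pair x' ` r'"
          | (b') e2 where "e2 \<in> TE 0" "e = {(ex e2, \<alpha> p' e2), (ey e2, nb p' (f e2))}"
          unfolding tE_def by blast
        then show False
        proof cases
          case a'
          obtain c' d' where "r' = {c',d'}" using graph_edge[OF gR[OF pp(2)]] a' by blast
          then have "x' = x" using fe a' by auto
          then have "r = r'" using a a' injP by (metis inj_image_eq_iff)
          then show False using Rdisj pp a(2) a'(2) by blast
        next
          case b'
          then have "e2 = {x}" using connf[OF b'(1), of p'] fe by simp
          then show False using edge_not_single[OF g0 b'(1)] by simp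
        qed
      next
        case b
        have fe: "fst ` e = e1" using connf[OF b(1), of p] b(2) by simp
        from e(2) consider (a') x' r' where "x' \<in> TV 0" "r' \<in> RE p'" "e = Pair x' ` r'"
          | (b') e2 where "e2 \<in> TE 0" "e = {(ex e2, \<alpha> p' e2), (ey e2, nb p' (f e2))}"
          unfolding tE_def by blast
        then show False
        proof cases
          case a'
          obtain c' d' where "r' = {c',d'}" using graph_edge[OF gR[OF pp(2)]] a' by blast
          then have "fst ` e = {x'}" using a' by auto
          then show False using fe edge_not_single[OF g0 b(1)] by simp
        next
          case b'
          have "e2 = e1" using connf[OF b'(1), of p'] b'(2) fe by simp
          then have eq: "{(ex e1, \<alpha> p e1), (ey e1, nb p (f e1))} = {(ex e1, \<alpha> p' e1), (ey e1, nb p' (f e1))}"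
            using b(2) b'(2) by simp
          have "ex e1 \<noteq> ey e1" using exy2[OF b(1)] by simp
          then have "nb p (f e1) = nb p' (f e1)" using eq unfolding doubleton_eq_iff by auto
          moreover have "{f e1, nb p (f e1)} \<in> RE p" using nbR pp(1) fB b(1) by blast
          moreover have "{f e1, nb p' (f e1)} \<in> RE p'" using nbR pp(2) fB b(1) by blast
          ultimately have "{f e1, nb p (f e1)} \<in> RE p \<inter> RE p'" by simp
          then show False using Rdisj pp by blast
        qed
      qed
    qed
  qed
qed

lemma extras_tot_cross:
  assumes gc: "good_copies \<sigma> w" and k0: "0 < k"
    and exy: "\<forall>e\<in>TE 0. e = {ex e, ey e}"
    and good: "\<forall>p<l. \<forall>e\<in>TE 0. \<forall>j\<in>VH. ((ex e, \<alpha> p e) \<in> S \<longrightarrow> w 0 (ex e) \<noteq> ey e) \<and>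
          ((ey e, nb p (f e)) \<in> S \<longrightarrow> w 0 (ey e) \<noteq> ex e) \<and>
          \<not> (\<sigma> 0 (ex e) j = \<alpha> p e \<and> \<sigma> 0 (ey e) j = nb p (f e))"
  shows "\<forall>t<k. \<forall>j\<in>VH. \<forall>p<l. cE S (\<sigma> t) (w t) (TE t) j \<inter> tE ex ey f \<alpha> nb p = {}"
proof (intro allI impI ballI)
  fix t j p assume t: "t < k" and j: "j \<in> VH" and p: "p < l"
  interpret c: copyset VG EG VH EH S "TV t" "TE t" "\<sigma> t" "w t" using copyset_t[OF gc t] .
  have g0: "graph (TV 0) (TE 0)" using gT k0 by blast
  show "cE S (\<sigma> t) (w t) (TE t) j \<inter> tE ex ey f \<alpha> nb p = {}"
  proof (rule ccontr)
    assume "cE S (\<sigma> t) (w t) (TE t) j \<inter> tE ex ey f \<alpha> nb p \<noteq> {}"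
    then obtain e where e: "e \<in> cE S (\<sigma> t) (w t) (TE t) j" "e \<in> tE ex ey f \<alpha> nb p" by blast
    have pe: "fst ` e \<in> TE t" using c.copy_proj e(1) .
    from e(2) consider (a) x r where "x \<in> TV 0" "r \<in> RE p" "e = Pair x ` r"
      | (b) e1 where "e1 \<in> TE 0" "e = {(ex e1, \<alpha> p e1), (ey e1, nb p (f e1))}"
      unfolding tE_def by blast
    then show False
    proof cases
      case a
      obtain c d where "r = {c,d}" using graph_edge[OF gR[OF p]] a by blast
      then have "fst ` e = {x}" using a by auto
      then show False using pe edge_not_single[OF gT[OF t]] by metis
    next
      case b
      have fe: "fst ` e = e1" using exy b by simp
      show False
      proof (cases "t = 0")
        case False
        then show False using Tdisj t k0 pe fe b(1) by blast
      next
        case True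
        have ne: "ex e1 \<noteq> ey e1" using graph_edge2[OF g0, of "ex e1" "ey e1"] exy b(1) by auto
        have "{(ex e1, \<alpha> p e1), (ey e1, nb p (f e1))} \<notin> cE S (\<sigma> 0) (w 0) (TE 0) j"
          using copyset.copy_vs_conn[OF copyset_t[OF gc k0] ne] good p b(1) j by blast
        then show False using e(1) b(2) True by simp
      qed
    qed
  qed
qed

end

definition sw :: "'b \<Rightarrow> 'b \<Rightarrow> 'b \<Rightarrow> 'b" where
  "sw a b j = (if j = a then b else if j = b then a else j)"

lemma sw_sw: "sw a b (sw a b j) = j" unfolding sw_def by auto

lemma sw_in: "a \<in> V \<Longrightarrow> b \<in> V \<Longrightarrow> j \<in> V \<Longrightarrow> sw a b j \<in> V" unfolding sw_def by auto

lemma sw_bij: "a \<in> V \<Longrightarrow> b \<in> V \<Longrightarrow> bij_betw (sw a b) V V"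
  by (rule bij_betw_byWitness[where f'="sw a b"]) (auto simp: sw_sw sw_in)

lemma sw_eq_b: "sw a b j = b \<Longrightarrow> j = a" unfolding sw_def by (auto split: if_splits)

lemma sw_other: "z \<noteq> a \<Longrightarrow> z \<noteq> b \<Longrightarrow> sw a b j = z \<Longrightarrow> j = z" unfolding sw_def by (auto split: if_splits)

context setting begin

lemma cardR: "p < l \<Longrightarrow> 3 \<le> card (RV p)"
  using RH card_mono[OF tree_facts(2)] cB by metis

lemma nb_ex: "p < l \<Longrightarrow> b \<in> B \<Longrightarrow> \<exists>y. {b,y} \<in> RE p"
proof -
  assume p: "p < l" and b: "b \<in> B"
  have a: "is_tree (RV p) (RE p)" "b \<in> RV p" using RH p b by auto
  have c: "2 \<le> card (RV p)" using cardR[OF p] by simp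
  show ?thesis using tree_nb[OF a c] .
qed

definition nbf where "nbf p b = (SOME y. {b,y} \<in> RE p)"

lemma nbf: "p < l \<Longrightarrow> b \<in> B \<Longrightarrow> {b, nbf p b} \<in> RE p"
  unfolding nbf_def using nb_ex someI_ex by metis

lemma nbf_ne: "p < l \<Longrightarrow> b \<in> B \<Longrightarrow> nbf p b \<noteq> b"
  using nbf graph_edge2[OF gR] by metis

lemma nbf_ne2: "p < l \<Longrightarrow> b \<in> B \<Longrightarrow> b \<noteq> nbf p b"
  using nbf_ne by metis

lemma nbf_V: "p < l \<Longrightarrow> b \<in> B \<Longrightarrow> nbf p b \<in> RV p"
  using nbf graph_edge2[OF gR] by metis

lemma tnb_ex: "t < k \<Longrightarrow> x \<in> fst ` S \<Longrightarrow> \<exists>y. {x,y} \<in> TE t"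
proof -
  assume t: "t < k" and x: "x \<in> fst ` S"
  have a: "is_tree (TV t) (TE t)" "x \<in> TV t" using TG t x by auto
  have b: "2 \<le> card (TV t)" using cT t by fastforce
  show ?thesis using tree_nb[OF a b] .
qed

definition wf where "wf t x = (SOME y. {x,y} \<in> TE t)"

lemma wf: "t < k \<Longrightarrow> x \<in> fst ` S \<Longrightarrow> {x, wf t x} \<in> TE t"
  unfolding wf_def using tnb_ex someI_ex by metis

lemma wf_ne: "t < k \<Longrightarrow> x \<in> fst ` S \<Longrightarrow> wf t x \<noteq> x"
  using wf graph_edge2[OF gT] by metis

lemma id_bij: "\<forall>t<k. \<forall>x\<in>TV t. bij_betw ((\<lambda>t x j. j) t x) VH VH"
  by (simp add: bij_betw_def)

lemma B_avoid2: "\<exists>d\<in>B. d \<noteq> a \<and> d \<noteq> b"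
proof -
  have "card (B - {a,b}) \<ge> 1"
  proof -
    have "card (B - {a,b}) \<ge> card B - card {a,b}" by (rule diff_card_le_card_Diff) simp
    moreover have "card {a,b} \<le> 2" by (simp add: card_insert_le_m1)
    ultimately show ?thesis using cB by linarith
  qed
  then obtain d where "d \<in> B - {a,b}" by (metis all_not_in_conv card.empty not_one_le_zero)
  then show ?thesis by blast
qed

lemma Bne: "\<exists>b. b \<in> B" using B_avoid2 by blast

lemma R_avoid2: "p < l \<Longrightarrow> \<exists>d\<in>RV p. d \<noteq> a \<and> d \<noteq> b"
proof -
  assume p: "p < l"
  have fin: "finite (RV p)" using RH p tree_facts(2) by blast
  have "card (RV p - {a,b}) \<ge> 1"
  proof -
    have "card (RV p - {a,b}) \<ge> card (RV p) - card {a,b}" by (rule diff_card_le_card_Diff) simp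
    moreover have "card {a,b} \<le> 2" by (simp add: card_insert_le_m1)
    ultimately show ?thesis using cardR[OF p] by linarith
  qed
  then obtain d where "d \<in> RV p - {a,b}" by (metis all_not_in_conv card.empty not_one_le_zero)
  then show ?thesis by blast
qed

lemma uG: "s \<in> S \<Longrightarrow> fst s \<in> VG \<and> snd s \<in> VH" using SS by auto

lemma case1:
  assumes u: "fst ` S \<subseteq> {u}"
  shows "fam (VG \<times> VH) (lex_edges VG EG VH EH) S (k * card VH + l)"
proof -
  let ?\<sigma> = "\<lambda>(t::nat) (x::'a) (j::'b). j"
  have gc: "good_copies ?\<sigma> wf"
    unfolding good_copies_def
  proof (intro allI impI)
    fix t assume t: "t < k"
    have A: "\<forall>x\<in>fst ` S. {x, wf t x} \<in> TE t" using wf[OF t] by blast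
    have Bj: "\<forall>x\<in>TV t. bij_betw (?\<sigma> t x) VH VH" by (simp add: bij_betw_def)
    have C: "\<forall>s\<in>S. \<forall>s'\<in>S. \<forall>j\<in>VH. \<forall>j'\<in>VH. wf t (fst s) = fst s' \<longrightarrow> wf t (fst s') = fst s \<longrightarrow>
             ?\<sigma> t (fst s) j' = snd s \<longrightarrow> ?\<sigma> t (fst s') j = snd s' \<longrightarrow> j = j'"
    proof (intro ballI impI)
      fix s s' j j' assume s: "s \<in> S" "s' \<in> S" and h: "wf t (fst s) = fst s'"
      have "fst s = u" "fst s' = u" using u s by auto
      moreover have "fst s \<in> fst ` S" using s by blast
      ultimately have False using wf_ne[OF t] h by metis
      then show "j = j'" ..
    qed
    show "(\<forall>x\<in>fst ` S. {x, wf t x} \<in> TE t) \<and> (\<forall>x\<in>TV t. bij_betw (?\<sigma> t x) VH VH) \<and>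
      (\<forall>s\<in>S. \<forall>s'\<in>S. \<forall>j\<in>VH. \<forall>j'\<in>VH. wf t (fst s) = fst s' \<longrightarrow> wf t (fst s') = fst s \<longrightarrow>
             ?\<sigma> t (fst s) j' = snd s \<longrightarrow> ?\<sigma> t (fst s') j = snd s' \<longrightarrow> j = j')"
      using A Bj C by blast
  qed
  have "S \<noteq> {}" using cS by auto
  then obtain s0 where "s0 \<in> S" by blast
  then have "fst s0 = u" using u by auto
  then have u': "u \<in> VG" using uG[OF \<open>s0 \<in> S\<close>] by simp
  note L = extras_layer[OF u u']
  have cross: "\<forall>t<k. \<forall>j\<in>VH. \<forall>p<l. cE S (?\<sigma> t) (wf t) (TE t) j \<inter> (\<lambda>e. Pair u ` e) ` RE p = {}"
  proof (intro allI impI ballI)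
    fix t j p assume "t < k" "j \<in> VH" "p < l"
    then have "\<forall>e\<in>(\<lambda>e. Pair u ` e) ` RE p. \<exists>x. fst ` e = {x}" using L(3) by blast
    then show "cE S (?\<sigma> t) (wf t) (TE t) j \<inter> (\<lambda>e. Pair u ` e) ` RE p = {}"
      by (rule single_proj_disj[OF gc \<open>t < k\<close>])
  qed
  show ?thesis by (rule assemble[OF gc L(1) L(2) cross])
qed

end

lemma nonmutual:
  assumes t: "is_tree X E" and c: "3 \<le> card X" and u: "u \<in> X" and u': "u' \<in> X" and uu: "u \<noteq> u'"
  shows "\<exists>a b. {u,a} \<in> E \<and> {u',b} \<in> E \<and> \<not> (a = u' \<and> b = u)"
proof (rule ccontr)
  assume H: "\<not> ?thesis"
  have c2: "2 \<le> card X" using c by simp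
  obtain a0 where a0: "{u,a0} \<in> E" using tree_nb[OF t u c2] by blast
  obtain b0 where b0: "{u',b0} \<in> E" using tree_nb[OF t u' c2] by blast
  have nu: "z = u'" if "{u,z} \<in> E" for z using H that b0 by blast
  have nu': "z = u" if "{u',z} \<in> E" for z using H that a0 by blast
  have fin: "finite X" using tree_facts(2)[OF t] .
  have "card (X - {u,u'}) \<ge> 1"
  proof -
    have "card (X - {u,u'}) \<ge> card X - card {u,u'}" by (rule diff_card_le_card_Diff) simp
    then show ?thesis using c uu by simp
  qed
  then obtain z where z: "z \<in> X" "z \<noteq> u" "z \<noteq> u'" by (metis DiffE all_not_in_conv card.empty insertCI not_one_le_zero)
  have "(u,z) \<in> (adj_rel X E)\<^sup>*" using tree_facts(4)[OF t] u z unfolding connected_graph_def by blast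
  then have "z \<in> {u,u'}"
  proof (induction rule: rtrancl_induct)
    case base then show ?case by simp
  next
    case (step y z)
    then have "{y,z} \<in> E" unfolding adj_rel_def by simp
    then show ?case using step.IH nu nu' by blast
  qed
  then show False using z by simp
qed

context setting begin

definition goodc where
  "goodc \<sigma> w x y a b \<longleftrightarrow> ((x,a) \<in> S \<longrightarrow> w 0 x \<noteq> y) \<and> ((y,b) \<in> S \<longrightarrow> w 0 y \<noteq> x) \<and>
      (\<forall>j\<in>VH. \<not> (\<sigma> 0 x j = a \<and> \<sigma> 0 y j = b))"

lemma ch_intro:
  assumes "e = {x,y}" "z \<in> B" "\<forall>p<l. goodc \<sigma> w x y z (nbf p z)"
  shows "\<exists>x y z. e = {x,y} \<and> z \<in> B \<and> (\<forall>p<l. \<exists>a\<in>RV p. goodc \<sigma> w x y a (nbf p z))"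
proof (intro exI conjI allI impI)
  show "e = {x,y}" "z \<in> B" by (fact assms(1), fact assms(2))
  fix p assume p: "p < l"
  have "z \<in> RV p" using RH p assms(2) by blast
  then show "\<exists>a\<in>RV p. goodc \<sigma> w x y a (nbf p z)" using assms(3) p by blast
qed

lemma tot_from_choice:
  assumes gc: "good_copies \<sigma> w"
    and ch: "\<forall>e\<in>TE 0. \<exists>x y z. e = {x,y} \<and> z \<in> B \<and> (\<forall>p<l. \<exists>a\<in>RV p. goodc \<sigma> w x y a (nbf p z))"
  shows "fam (VG \<times> VH) (lex_edges VG EG VH EH) S (k * card VH + l)"
proof -
  have ch': "\<forall>e\<in>TE 0. \<exists>q. e = {fst q, fst (snd q)} \<and> snd (snd q) \<in> B \<and>
      (\<forall>p<l. \<exists>a\<in>RV p. goodc \<sigma> w (fst q) (fst (snd q)) a (nbf p (snd (snd q))))"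
  proof
    fix e assume "e \<in> TE 0"
    with ch have "\<exists>x y z. e = {x,y} \<and> z \<in> B \<and> (\<forall>p<l. \<exists>a\<in>RV p. goodc \<sigma> w x y a (nbf p z))" by (rule bspec)
    then obtain x y z where "e = {x,y}" "z \<in> B" "\<forall>p<l. \<exists>a\<in>RV p. goodc \<sigma> w x y a (nbf p z)" by (elim exE conjE)
    then show "\<exists>q. e = {fst q, fst (snd q)} \<and> snd (snd q) \<in> B \<and>
      (\<forall>p<l. \<exists>a\<in>RV p. goodc \<sigma> w (fst q) (fst (snd q)) a (nbf p (snd (snd q))))"
      by (intro exI[of _ "(x,y,z)"]) simp
  qed
  obtain F where F: "\<forall>e\<in>TE 0. e = {fst (F e), fst (snd (F e))} \<and> snd (snd (F e)) \<in> B \<and>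
      (\<forall>p<l. \<exists>a\<in>RV p. goodc \<sigma> w (fst (F e)) (fst (snd (F e))) a (nbf p (snd (snd (F e)))))"
    using bchoice[OF ch'] by blast
  define ex where "ex e = fst (F e)" for e
  define ey where "ey e = fst (snd (F e))" for e
  define f where "f e = snd (snd (F e))" for e
  define \<alpha> where "\<alpha> p e = (SOME a. a \<in> RV p \<and> goodc \<sigma> w (ex e) (ey e) a (nbf p (f e)))" for p e
  have exy: "\<forall>e\<in>TE 0. e = {ex e, ey e}" using F unfolding ex_def ey_def by blast
  have fB: "\<forall>e\<in>TE 0. f e \<in> B" using F unfolding f_def by blast
  have al: "\<alpha> p e \<in> RV p \<and> goodc \<sigma> w (ex e) (ey e) (\<alpha> p e) (nbf p (f e))" if "p < l" "e \<in> TE 0" for p e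
  proof -
    have "\<exists>a. a \<in> RV p \<and> goodc \<sigma> w (ex e) (ey e) a (nbf p (f e))"
      using F that unfolding ex_def ey_def f_def by blast
    then show ?thesis unfolding \<alpha>_def by (rule someI_ex)
  qed
  have nbR: "\<forall>p<l. \<forall>b\<in>B. {b, nbf p b} \<in> RE p" using nbf by blast
  have aR: "\<forall>p<l. \<forall>e\<in>TE 0. \<alpha> p e \<in> RV p" using al by blast
  have good: "\<forall>p<l. \<forall>e\<in>TE 0. \<forall>j\<in>VH. ((ex e, \<alpha> p e) \<in> S \<longrightarrow> w 0 (ex e) \<noteq> ey e) \<and>
          ((ey e, nbf p (f e)) \<in> S \<longrightarrow> w 0 (ey e) \<noteq> ex e) \<and>
          \<not> (\<sigma> 0 (ex e) j = \<alpha> p e \<and> \<sigma> 0 (ey e) j = nbf p (f e))"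
    using al unfolding goodc_def by blast
  note X = extras_tot[where ex=ex and ey=ey and f=f and \<alpha>=\<alpha> and nb=nbf, OF k0 exy fB nbR aR]
  note C = extras_tot_cross[where ex=ex and ey=ey and f=f and \<alpha>=\<alpha> and nb=nbf, OF gc k0 exy good]
  show ?thesis by (rule assemble[OF gc X(1) X(2) C])
qed

lemma case2:
  assumes uu: "u \<noteq> u'" and fS: "fst ` S = {u,u'}" and c: "(u',c) \<in> S" and cu: "\<forall>v. (u',v) \<in> S \<longrightarrow> v = c"
    and dS: "d \<in> B" "(u,d) \<notin> S"
  shows "fam (VG \<times> VH) (lex_edges VG EG VH EH) S (k * card VH + l)"
proof -
  have NM: "\<forall>t. \<exists>q. t < k \<longrightarrow> {u, fst q} \<in> TE t \<and> {u', snd q} \<in> TE t \<and> \<not> (fst q = u' \<and> snd q = u)"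
  proof
    fix t
    show "\<exists>q. t < k \<longrightarrow> {u, fst q} \<in> TE t \<and> {u', snd q} \<in> TE t \<and> \<not> (fst q = u' \<and> snd q = u)"
    proof (cases "t < k")
      case True
      have a: "is_tree (TV t) (TE t)" "u \<in> TV t" "u' \<in> TV t" using TG True fS by auto
      have b: "3 \<le> card (TV t)" using cT True by blast
      obtain a' b' where "{u,a'} \<in> TE t \<and> {u',b'} \<in> TE t \<and> \<not> (a' = u' \<and> b' = u)"
        using nonmutual[OF a(1) b a(2) a(3) uu] by blast
      then show ?thesis by (intro exI[of _ "(a',b')"]) simp
    qed simp
  qed
  obtain g where g: "\<forall>t. t < k \<longrightarrow> {u, fst (g t)} \<in> TE t \<and> {u', snd (g t)} \<in> TE t \<and> \<not> (fst (g t) = u' \<and> snd (g t) = u)"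
    using choice[OF NM] by blast
  define w where "w t x = (if x = u then fst (g t) else snd (g t))" for t x
  let ?\<sigma> = "\<lambda>(t::nat) (x::'a) (j::'b). j"
  have wE: "{x, w t x} \<in> TE t" if "t < k" "x \<in> fst ` S" for t x
    using that g fS uu unfolding w_def by auto
  have wne: "w t x \<noteq> x" if "t < k" "x \<in> fst ` S" for t x
    using wE[OF that] graph_edge2[OF gT[OF that(1)]] by metis
  have gc: "good_copies ?\<sigma> w"
    unfolding good_copies_def
  proof (intro allI impI)
    fix t assume t: "t < k"
    have A: "\<forall>x\<in>fst ` S. {x, w t x} \<in> TE t" using wE[OF t] by blast
    have Bj: "\<forall>x\<in>TV t. bij_betw (?\<sigma> t x) VH VH" by (simp add: bij_betw_def)
    have C: "\<forall>s\<in>S. \<forall>s'\<in>S. \<forall>j\<in>VH. \<forall>j'\<in>VH. w t (fst s) = fst s' \<longrightarrow> w t (fst s') = fst s \<longrightarrow>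
             ?\<sigma> t (fst s) j' = snd s \<longrightarrow> ?\<sigma> t (fst s') j = snd s' \<longrightarrow> j = j'"
    proof (intro ballI impI)
      fix s s' j j' assume s: "s \<in> S" "s' \<in> S" and h: "w t (fst s) = fst s'" "w t (fst s') = fst s"
      have m: "fst s \<in> {u,u'}" "fst s' \<in> {u,u'}" using fS s by auto
      have ne: "fst s \<noteq> fst s'" using wne[OF t] h s by force
      have "\<not> (fst (g t) = u' \<and> snd (g t) = u)" using g t by blast
      then have False using m ne h uu unfolding w_def by auto
      then show "j = j'" ..
    qed
    show "(\<forall>x\<in>fst ` S. {x, w t x} \<in> TE t) \<and> (\<forall>x\<in>TV t. bij_betw (?\<sigma> t x) VH VH) \<and>
      (\<forall>s\<in>S. \<forall>s'\<in>S. \<forall>j\<in>VH. \<forall>j'\<in>VH. w t (fst s) = fst s' \<longrightarrow> w t (fst s') = fst s \<longrightarrow>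
             ?\<sigma> t (fst s) j' = snd s \<longrightarrow> ?\<sigma> t (fst s') j = snd s' \<longrightarrow> j = j')"
      using A Bj C by blast
  qed
  have g0: "graph (TV 0) (TE 0)" using gT k0 by blast
  have inS: "x = u \<or> x = u'" if "(x,v) \<in> S" for x v using fS that by force
  have cB: "c \<in> B" using c SB by force
  have w0: "w 0 u = fst (g 0)" "w 0 u' = snd (g 0)" unfolding w_def using uu by auto
  have nm0: "\<not> (w 0 u = u' \<and> w 0 u' = u)" using g k0 w0 by auto
  have ch: "\<forall>e\<in>TE 0. \<exists>x y z. e = {x,y} \<and> z \<in> B \<and> (\<forall>p<l. \<exists>a\<in>RV p. goodc ?\<sigma> w x y a (nbf p z))"
  proof
    fix e assume e: "e \<in> TE 0"
    obtain x0 y0 where xy0: "x0 \<noteq> y0" "e = {x0,y0}" using graph_edge[OF g0 e] by blast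
    show "\<exists>x y z. e = {x,y} \<and> z \<in> B \<and> (\<forall>p<l. \<exists>a\<in>RV p. goodc ?\<sigma> w x y a (nbf p z))"
    proof (cases "u \<in> e")
      case uin: True
      show ?thesis
      proof (cases "u' \<in> e")
        case True
        then have e2: "e = {u,u'}" using uin xy0 uu by auto
        show ?thesis
        proof (cases "w 0 u = u'")
          case False
          have "\<forall>p<l. goodc ?\<sigma> w u u' c (nbf p c)"
            using False nbf_ne[OF _ cB] nbf_ne2[OF _ cB] cu unfolding goodc_def by auto
          then show ?thesis by (rule ch_intro[OF e2 cB])
        next
          case True
          then have "w 0 u' \<noteq> u" using nm0 by blast
          then have "\<forall>p<l. goodc ?\<sigma> w u u' d (nbf p d)"
            using dS nbf_ne[OF _ dS(1)] nbf_ne2[OF _ dS(1)] unfolding goodc_def by auto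
          then show ?thesis by (rule ch_intro[OF e2 dS(1)])
        qed
      next
        case False
        then obtain y where e2: "e = {u,y}" "y \<noteq> u" "y \<noteq> u'" using uin xy0 by auto
        have "\<forall>p<l. goodc ?\<sigma> w u y d (nbf p d)"
          using dS nbf_ne[OF _ dS(1)] nbf_ne2[OF _ dS(1)] inS e2 unfolding goodc_def by blast
        then show ?thesis by (rule ch_intro[OF e2(1) dS(1)])
      qed
    next
      case unin: False
      show ?thesis
      proof (cases "u' \<in> e")
        case True
        then obtain y where e2: "e = {u',y}" "y \<noteq> u" "y \<noteq> u'" using unin xy0 by auto
        obtain z where z: "z \<in> B" "z \<noteq> c" using B_avoid2[of c c] by blast
        have "\<forall>p<l. goodc ?\<sigma> w u' y z (nbf p z)"
          using z nbf_ne[OF _ z(1)] nbf_ne2[OF _ z(1)] inS e2 cu unfolding goodc_def by blast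
        then show ?thesis by (rule ch_intro[OF e2(1) z(1)])
      next
        case False
        then have "x0 \<noteq> u" "x0 \<noteq> u'" "y0 \<noteq> u" "y0 \<noteq> u'" using unin xy0 by auto
        obtain z where z: "z \<in> B" using Bne by blast
        have "\<forall>p<l. goodc ?\<sigma> w x0 y0 z (nbf p z)"
          using z nbf_ne[OF _ z] nbf_ne2[OF _ z] inS \<open>x0 \<noteq> u\<close> \<open>x0 \<noteq> u'\<close> \<open>y0 \<noteq> u\<close> \<open>y0 \<noteq> u'\<close> unfolding goodc_def by blast
        then show ?thesis by (rule ch_intro[OF xy0(2) z])
      qed
    qed
  qed
  show ?thesis by (rule tot_from_choice[OF gc ch])
qed

end

context setting begin

lemma case3:
  assumes inj: "inj_on fst S"
  shows "fam (VG \<times> VH) (lex_edges VG EG VH EH) S (k * card VH + l)"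
proof -
  define U where "U = fst ` S"
  define vf where "vf x = (SOME v. (x,v) \<in> S)" for x
  have inS: "(x,v) \<in> S \<longleftrightarrow> x \<in> U \<and> v = vf x" for x v
  proof
    assume xv: "(x,v) \<in> S"
    then have "(x, vf x) \<in> S" unfolding vf_def by (rule someI)
    then have "(x,v) = (x, vf x)" using inj xv unfolding inj_on_def by force
    then show "x \<in> U \<and> v = vf x" using xv unfolding U_def by force
  next
    assume "x \<in> U \<and> v = vf x"
    then obtain v' where "(x,v') \<in> S" "v = vf x" unfolding U_def by force
    then show "(x,v) \<in> S" unfolding vf_def by (metis someI)
  qed
  have vfB: "vf x \<in> B" if "x \<in> U" for x using inS[of x "vf x"] that SB by force
  obtain j0 where j0: "j0 \<in> B" using Bne by blast
  have j0H: "j0 \<in> VH" using j0 BH by blast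
  have vfH: "vf x \<in> VH" if "x \<in> U" for x using vfB[OF that] BH by blast
  define \<sigma> where "\<sigma> t x j = (if x \<in> U then sw j0 (vf x) j else j)" for t :: nat and x j
  have gc: "good_copies \<sigma> wf"
    unfolding good_copies_def
  proof (intro allI impI)
    fix t assume t: "t < k"
    have A: "\<forall>x\<in>fst ` S. {x, wf t x} \<in> TE t" using wf[OF t] by blast
    have Bj: "\<forall>x\<in>TV t. bij_betw (\<sigma> t x) VH VH"
    proof
      fix x show "bij_betw (\<sigma> t x) VH VH"
      proof (cases "x \<in> U")
        case True then show ?thesis unfolding \<sigma>_def using sw_bij[OF j0H vfH[OF True]] by simp
      next
        case False then show ?thesis unfolding \<sigma>_def by (simp add: bij_betw_def)
      qed
    qed
    have C: "\<forall>s\<in>S. \<forall>s'\<in>S. \<forall>j\<in>VH. \<forall>j'\<in>VH. wf t (fst s) = fst s' \<longrightarrow> wf t (fst s') = fst s \<longrightarrow>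
             \<sigma> t (fst s) j' = snd s \<longrightarrow> \<sigma> t (fst s') j = snd s' \<longrightarrow> j = j'"
    proof (intro ballI impI)
      fix s s' j j' assume s: "s \<in> S" "s' \<in> S" and h: "\<sigma> t (fst s) j' = snd s" "\<sigma> t (fst s') j = snd s'"
      have "fst s \<in> U" "snd s = vf (fst s)" using inS[of "fst s" "snd s"] s(1) by auto
      then have "j' = j0" using h(1) sw_eq_b unfolding \<sigma>_def by metis
      moreover have "fst s' \<in> U" "snd s' = vf (fst s')" using inS[of "fst s'" "snd s'"] s(2) by auto
      then have "j = j0" using h(2) sw_eq_b unfolding \<sigma>_def by metis
      ultimately show "j = j'" by simp
    qed
    show "(\<forall>x\<in>fst ` S. {x, wf t x} \<in> TE t) \<and> (\<forall>x\<in>TV t. bij_betw (\<sigma> t x) VH VH) \<and>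
      (\<forall>s\<in>S. \<forall>s'\<in>S. \<forall>j\<in>VH. \<forall>j'\<in>VH. wf t (fst s) = fst s' \<longrightarrow> wf t (fst s') = fst s \<longrightarrow>
             \<sigma> t (fst s) j' = snd s \<longrightarrow> \<sigma> t (fst s') j = snd s' \<longrightarrow> j = j')"
      using A Bj C by blast
  qed
  have g0: "graph (TV 0) (TE 0)" using gT k0 by blast
  have oneU: "goodc \<sigma> wf x y z (nbf p z)" if x: "x \<in> U" and y: "y \<notin> U" and z: "z \<in> B" "z \<noteq> vf x" "z \<noteq> j0"
     and p: "p < l" for x y z p
    unfolding goodc_def
  proof (intro conjI impI ballI)
    show "(x,z) \<in> S \<Longrightarrow> wf 0 x \<noteq> y" using inS z by auto
    show "(y, nbf p z) \<in> S \<Longrightarrow> wf 0 y \<noteq> x" using inS y by auto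
    fix j assume "j \<in> VH"
    show "\<not> (\<sigma> 0 x j = z \<and> \<sigma> 0 y j = nbf p z)"
    proof
      assume h: "\<sigma> 0 x j = z \<and> \<sigma> 0 y j = nbf p z"
      then have "sw j0 (vf x) j = z" using x unfolding \<sigma>_def by simp
      then have "j = z" using sw_other z by metis
      moreover have "j = nbf p z" using h y unfolding \<sigma>_def by simp
      ultimately show False using nbf_ne[OF p z(1)] by simp
    qed
  qed
  have ch: "\<forall>e\<in>TE 0. \<exists>x y z. e = {x,y} \<and> z \<in> B \<and> (\<forall>p<l. \<exists>a\<in>RV p. goodc \<sigma> wf x y a (nbf p z))"
  proof
    fix e assume e: "e \<in> TE 0"
    obtain x0 y0 where xy0: "x0 \<noteq> y0" "e = {x0,y0}" using graph_edge[OF g0 e] by blast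
    show "\<exists>x y z. e = {x,y} \<and> z \<in> B \<and> (\<forall>p<l. \<exists>a\<in>RV p. goodc \<sigma> wf x y a (nbf p z))"
    proof (cases "x0 \<in> U")
      case xU: True
      show ?thesis
      proof (cases "y0 \<in> U")
        case yU: True
        have "\<forall>p<l. \<exists>a\<in>RV p. goodc \<sigma> wf x0 y0 a (nbf p (vf y0))"
        proof (intro allI impI)
          fix p assume p: "p < l"
          let ?nb = "nbf p (vf y0)"
          obtain a where a: "a \<in> RV p" "a \<noteq> vf x0" "a \<noteq> sw j0 (vf x0) (sw j0 (vf y0) ?nb)"
            using R_avoid2[OF p] by blast
          have "goodc \<sigma> wf x0 y0 a ?nb"
            unfolding goodc_def
          proof (intro conjI impI ballI)
            show "(x0,a) \<in> S \<Longrightarrow> wf 0 x0 \<noteq> y0" using inS a by auto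
            show "(y0, ?nb) \<in> S \<Longrightarrow> wf 0 y0 \<noteq> x0" using inS nbf_ne[OF p vfB[OF yU]] by auto
            fix j assume "j \<in> VH"
            show "\<not> (\<sigma> 0 x0 j = a \<and> \<sigma> 0 y0 j = ?nb)"
            proof
              assume h: "\<sigma> 0 x0 j = a \<and> \<sigma> 0 y0 j = ?nb"
              then have h1: "sw j0 (vf x0) j = a" "sw j0 (vf y0) j = ?nb" using xU yU unfolding \<sigma>_def by auto
              then have "j = sw j0 (vf y0) ?nb" using sw_sw by metis
              then show False using h1(1) a(3) by simp
            qed
          qed
          then show "\<exists>a\<in>RV p. goodc \<sigma> wf x0 y0 a ?nb" using a(1) by blast
        qed
        then show ?thesis using xy0(2) vfB[OF yU] by blast
      next
        case yU: False
        obtain z where z: "z \<in> B" "z \<noteq> vf x0" "z \<noteq> j0" using B_avoid2 by blast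
        have "\<forall>p<l. goodc \<sigma> wf x0 y0 z (nbf p z)" using oneU[OF xU yU z] by blast
        then show ?thesis by (rule ch_intro[OF xy0(2) z(1)])
      qed
    next
      case xU: False
      show ?thesis
      proof (cases "y0 \<in> U")
        case yU: True
        obtain z where z: "z \<in> B" "z \<noteq> vf y0" "z \<noteq> j0" using B_avoid2 by blast
        have g: "\<forall>p<l. goodc \<sigma> wf y0 x0 z (nbf p z)" using oneU[OF yU xU z] by blast
        have ee: "e = {y0,x0}" using xy0 by (simp add: insert_commute)
        show ?thesis by (rule ch_intro[OF ee z(1) g])
      next
        case yU: False
        obtain z where z: "z \<in> B" using Bne by blast
        have "\<forall>p<l. goodc \<sigma> wf x0 y0 z (nbf p z)"
        proof (intro allI impI)
          fix p assume p: "p < l"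
          show "goodc \<sigma> wf x0 y0 z (nbf p z)"
            unfolding goodc_def \<sigma>_def using inS xU yU nbf_ne[OF p z] by auto
        qed
        then show ?thesis by (rule ch_intro[OF xy0(2) z(1)])
      qed
    qed
  qed
  show ?thesis by (rule tot_from_choice[OF gc ch])
qed

end

context setting begin

lemma case2':
  assumes uu: "u \<noteq> u'" and fS: "fst ` S = {u,u'}" and c1: "card {v. (u',v) \<in> S} = 1"
  shows "fam (VG \<times> VH) (lex_edges VG EG VH EH) S (k * card VH + l)"
proof -
  obtain c where c: "{v. (u',v) \<in> S} = {c}" using c1 card_1_singletonE by blast
  have cc: "(u',c) \<in> S" "\<forall>v. (u',v) \<in> S \<longrightarrow> v = c" using c by auto
  let ?Su = "{v. (u,v) \<in> S}"
  have Seq: "S = Pair u ` ?Su \<union> Pair u' ` {v. (u',v) \<in> S}"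
  proof
    show "S \<subseteq> Pair u ` ?Su \<union> Pair u' ` {v. (u',v) \<in> S}"
    proof
      fix s assume s: "s \<in> S"
      then have "fst s = u \<or> fst s = u'" using fS by auto
      then show "s \<in> Pair u ` ?Su \<union> Pair u' ` {v. (u',v) \<in> S}" using s by (cases s) auto
    qed
  qed auto
  have finSu: "finite ?Su"
  proof -
    have "?Su \<subseteq> snd ` S" by force
    then show ?thesis using finS finite_subset by blast
  qed
  have fin2: "finite (Pair u' ` {v. (u',v) \<in> S})" using c by simp
  have "card S = card (Pair u ` ?Su) + card (Pair u' ` {v. (u',v) \<in> S})"
    by (subst Seq, rule card_Un_disjoint) (use finSu fin2 uu in auto)
  moreover have "card (Pair u ` ?Su) = card ?Su" by (rule card_image) (simp add: inj_on_def)
  moreover have "card (Pair u' ` {v. (u',v) \<in> S}) = 1" using c by simp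
  ultimately have c2: "card ?Su = 2" using cS by simp
  have "\<not> B \<subseteq> ?Su"
  proof
    assume "B \<subseteq> ?Su"
    then have "card B \<le> card ?Su" using card_mono finSu by blast
    then show False using cB c2 by simp
  qed
  then obtain d where "d \<in> B" "(u,d) \<notin> S" by blast
  then show ?thesis using case2[OF uu fS cc(1) cc(2)] by blast
qed

lemma main_case:
  shows "fam (VG \<times> VH) (lex_edges VG EG VH EH) S (k * card VH + l)"
proof -
  have c3: "card (fst ` S) \<le> 3" using card_image_le[OF finS] cS by simp
  have c0: "card (fst ` S) \<noteq> 0" using cS finS by (metis card_0_eq card.empty finite_imageI image_is_empty zero_neq_numeral)
  consider "card (fst ` S) = 1" | "card (fst ` S) = 2" | "card (fst ` S) = 3" using c3 c0 by linarith
  then show ?thesis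
  proof cases
    case 1
    then obtain u where "fst ` S = {u}" using card_1_singletonE by blast
    then show ?thesis using case1 by blast
  next
    case 3
    then have "inj_on fst S" using cS finS by (simp add: eq_card_imp_inj_on)
    then show ?thesis using case3 by blast
  next
    case 2
    then obtain u u' where uu: "fst ` S = {u,u'}" "u \<noteq> u'" using card_2_iff by metis
    let ?Su = "{v. (u,v) \<in> S}" and ?Su' = "{v. (u',v) \<in> S}"
    have Seq: "S = Pair u ` ?Su \<union> Pair u' ` ?Su'"
    proof
      show "S \<subseteq> Pair u ` ?Su \<union> Pair u' ` ?Su'"
      proof
        fix s assume s: "s \<in> S"
        then have "fst s = u \<or> fst s = u'" using uu by auto
        then show "s \<in> Pair u ` ?Su \<union> Pair u' ` ?Su'" using s by (cases s) auto
      qed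
    qed auto
    have fin1: "finite ?Su" "finite ?Su'"
    proof -
      have "?Su \<subseteq> snd ` S" "?Su' \<subseteq> snd ` S" by force+
      then show "finite ?Su" "finite ?Su'" using finS finite_subset by blast+
    qed
    have "card S = card (Pair u ` ?Su) + card (Pair u' ` ?Su')"
      by (subst Seq, rule card_Un_disjoint) (use fin1 uu in auto)
    moreover have "card (Pair u ` ?Su) = card ?Su" by (rule card_image) (simp add: inj_on_def)
    moreover have "card (Pair u' ` ?Su') = card ?Su'" by (rule card_image) (simp add: inj_on_def)
    ultimately have sum: "card ?Su + card ?Su' = 3" using cS by simp
    have ne: "?Su \<noteq> {}" "?Su' \<noteq> {}" using uu(1) by force+
    then have "card ?Su \<noteq> 0" "card ?Su' \<noteq> 0" using fin1 by auto
    then consider "card ?Su' = 1" | "card ?Su = 1" using sum by linarith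
    then show ?thesis
    proof cases
      case 1 then show ?thesis using case2'[OF uu(2) uu(1)] by blast
    next
      case 2
      have "fst ` S = {u',u}" using uu by (simp add: insert_commute)
      then show ?thesis using case2'[OF uu(2)[symmetric]] 2 by blast
    qed
  qed
qed

end

lemma lex_graph:
  assumes gG: "graph VG EG" and gH: "graph VH EH"
  shows "graph (VG \<times> VH) (lex_edges VG EG VH EH)"
  unfolding graph_def
proof (intro conjI ballI)
  show "finite (VG \<times> VH)" using gG gH unfolding graph_def by simp
  fix e assume "e \<in> lex_edges VG EG VH EH"
  then obtain u v u' v' where e: "e = {(u,v),(u',v')}" "u \<in> VG" "u' \<in> VG" "v \<in> VH" "v' \<in> VH"
    "{u,u'} \<in> EG \<or> (u = u' \<and> {v,v'} \<in> EH)" unfolding lex_edges_def by blast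
  have "(u,v) \<noteq> (u',v')"
    using e(6) graph_edge2[OF gG, of u u'] graph_edge2[OF gH, of v v'] by auto
  then show "\<exists>x y. x \<in> VG \<times> VH \<and> y \<in> VG \<times> VH \<and> x \<noteq> y \<and> e = {x, y}" using e by blast
qed

lemma k_pos:
  assumes gG: "graph VG EG" and c: "connected_graph VG EG" and cG: "3 \<le> card VG"
  shows "1 \<le> lambda_k 3 VG EG"
proof -
  have "VG \<noteq> {}" using cG by auto
  then obtain x0 where "x0 \<in> VG" by blast
  then obtain ET where ET: "ET \<subseteq> EG" "is_tree VG ET" using spanning_tree[OF gG c] by blast
  have "\<forall>S. S \<subseteq> VG \<and> card S = 3 \<longrightarrow> fam VG EG S 1"
  proof (intro allI impI)
    fix S assume S: "S \<subseteq> VG \<and> card S = 3"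
    show "fam VG EG S 1" unfolding fam_def
      by (intro exI[of _ "\<lambda>i. (VG, ET)"]) (simp add: steiner_tree_def ET S)
  qed
  then show ?thesis using lk_ge[OF gG c cG] by blast
qed

lemma part1:
  assumes gG: "graph VG EG" and gH: "graph VH EH" and cG: "3 \<le> card VG" and cH: "3 \<le> card VH"
    and con: "connected_graph VG EG"
  shows "lambda_k 3 VH EH + lambda_k 3 VG EG * card VH \<le> lambda_k 3 (VG \<times> VH) (lex_edges VG EG VH EH)"
proof -
  define k where "k = lambda_k 3 VG EG"
  define l where "l = lambda_k 3 VH EH"
  have k1: "1 \<le> k" unfolding k_def using k_pos[OF gG con cG] .
  have finG: "finite VG" and finH: "finite VH" using gG gH unfolding graph_def by auto
  have all: "\<forall>S. S \<subseteq> VG \<times> VH \<and> card S = 3 \<longrightarrow> fam (VG \<times> VH) (lex_edges VG EG VH EH) S (k * card VH + l)"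
  proof (intro allI impI)
    fix S assume S: "S \<subseteq> VG \<times> VH \<and> card S = 3"
    have finS: "finite S" using S by (metis card.infinite zero_neq_numeral)
    have "fst ` S \<subseteq> VG" "card (fst ` S) \<le> 3" using S card_image_le[OF finS] by auto
    then obtain A where A: "fst ` S \<subseteq> A" "A \<subseteq> VG" "card A = 3" using extend3[OF finG cG] by meson
    have "snd ` S \<subseteq> VH" "card (snd ` S) \<le> 3" using S card_image_le[OF finS] by auto
    then obtain B where B: "snd ` S \<subseteq> B" "B \<subseteq> VH" "card B = 3" using extend3[OF finH cH] by meson
    obtain T where T: "\<forall>i<k. steiner_tree VG EG A (fst (T i)) (snd (T i))"
      "\<forall>i<k. \<forall>j<k. i \<noteq> j \<longrightarrow> snd (T i) \<inter> snd (T j) = {}"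
      using lk_fam[OF gG A(2,3)] unfolding fam_def k_def by blast
    obtain R where R: "\<forall>i<l. steiner_tree VH EH B (fst (R i)) (snd (R i))"
      "\<forall>i<l. \<forall>j<l. i \<noteq> j \<longrightarrow> snd (R i) \<inter> snd (R j) = {}"
      using lk_fam[OF gH B(2,3)] unfolding fam_def l_def by blast
    have TG: "\<forall>t<k. is_tree (fst (T t)) (snd (T t)) \<and> fst (T t) \<subseteq> VG \<and> snd (T t) \<subseteq> EG \<and> fst ` S \<subseteq> fst (T t)"
      using T(1) A(1) unfolding steiner_tree_def by blast
    have RH: "\<forall>p<l. is_tree (fst (R p)) (snd (R p)) \<and> fst (R p) \<subseteq> VH \<and> snd (R p) \<subseteq> EH \<and> B \<subseteq> fst (R p)"
      using R(1) unfolding steiner_tree_def by blast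
    have cT: "\<forall>t<k. 3 \<le> card (fst (T t))"
    proof (intro allI impI)
      fix t assume t: "t < k"
      have "A \<subseteq> fst (T t)" "is_tree (fst (T t)) (snd (T t))" using T(1) t unfolding steiner_tree_def by auto
      then show "3 \<le> card (fst (T t))" using card_mono[OF tree_facts(2)] A(3) by metis
    qed
    interpret st: setting VG EG VH EH S k "\<lambda>t. fst (T t)" "\<lambda>t. snd (T t)" l "\<lambda>p. fst (R p)" "\<lambda>p. snd (R p)" B
      unfolding setting_def using gG gH S TG T(2) RH R(2) B cT k1 by auto
    show "fam (VG \<times> VH) (lex_edges VG EG VH EH) S (k * card VH + l)" by (rule st.main_case)
  qed
  have gP: "graph (VG \<times> VH) (lex_edges VG EG VH EH)" using lex_graph[OF gG gH] .
  have cP: "3 \<le> card (VG \<times> VH)"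
  proof -
    have "3 * 1 \<le> card VG * card VH" using cG cH by (intro mult_mono) auto
    then show ?thesis by (simp add: card_cartesian_product)
  qed
  have m: "1 \<le> k * card VH" using k1 cH by simp
  have N1: "1 \<le> k * card VH + l" using m by (rule trans_le_add1)
  have conP: "connected_graph (VG \<times> VH) (lex_edges VG EG VH EH)" using conn_from_fam[OF gP cP N1 all] .
  have "k * card VH + l \<le> lambda_k 3 (VG \<times> VH) (lex_edges VG EG VH EH)" using lk_ge[OF gP conP cP all] .
  then show ?thesis unfolding k_def l_def by simp
qed

abbreviation "VG0 \<equiv> {0,1,2::nat}"
abbreviation "EG0 \<equiv> {{0,1},{1,2::nat}}"
abbreviation "VH0 \<equiv> {0,1,2::nat}"
abbreviation "EH0 \<equiv> ({} :: nat set set)"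

lemma gG0: "graph VG0 EG0"
  unfolding graph_def
proof (intro conjI ballI)
  fix e assume "e \<in> EG0"
  then have "e = {0,1} \<or> e = {1,2}" by blast
  then show "\<exists>x y. x \<in> VG0 \<and> y \<in> VG0 \<and> x \<noteq> y \<and> e = {x, y}"
  proof
    assume "e = {0,1}" then show ?thesis by (intro exI[of _ 0] exI[of _ 1]) simp
  next
    assume "e = {1,2}" then show ?thesis by (intro exI[of _ 1] exI[of _ 2]) simp
  qed
qed simp

lemma gH0: "graph VH0 EH0" unfolding graph_def by simp

lemma cG0: "connected_graph VG0 EG0"
  unfolding connected_graph_def
proof (intro ballI)
  let ?A = "adj_rel VG0 EG0"
  have a: "(0,1) \<in> ?A" "(1,0) \<in> ?A" "(1,2) \<in> ?A" "(2,1) \<in> ?A"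
    unfolding adj_rel_def by (auto simp: insert_commute)
  have to1: "(x,1) \<in> ?A\<^sup>*" if "x \<in> VG0" for x using that a by auto
  have from1: "(1,y) \<in> ?A\<^sup>*" if "y \<in> VG0" for y using that a by auto
  fix x y assume "x \<in> VG0" "y \<in> VG0"
  then show "(x,y) \<in> ?A\<^sup>*" using to1 from1 by (meson rtrancl_trans)
qed

lemma lH0: "lambda_k 3 VH0 EH0 = 0"
proof -
  have "adj_rel VH0 EH0 = {}" unfolding adj_rel_def by simp
  then have "\<not> connected_graph VH0 EH0" unfolding connected_graph_def by auto
  then show ?thesis unfolding lambda_k_def by simp
qed

lemma lex0: "{(0,0), q} \<in> lex_edges VG0 EG0 VH0 EH0 \<Longrightarrow> fst q = 1 \<and> snd q \<in> VH0"
  unfolding lex_edges_def by (auto simp: doubleton_eq_iff)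

lemma upper0: "lambda_k 3 (VG0 \<times> VH0) (lex_edges VG0 EG0 VH0 EH0) \<le> 3"
proof (cases "connected_graph (VG0 \<times> VH0) (lex_edges VG0 EG0 VH0 EH0)")
  case False then show ?thesis unfolding lambda_k_def by simp
next
  case True
  let ?V = "VG0 \<times> VH0" and ?E = "lex_edges VG0 EG0 VH0 EH0"
  let ?S = "{(0,0),(1,0),(2,0)} :: (nat \<times> nat) set"
  have g: "graph ?V ?E" using lex_graph[OF gG0 gH0] .
  have S: "?S \<subseteq> ?V" "card ?S = 3" by auto
  have finS: "finite ?S" by simp
  have bnd: "m \<le> 3" if f: "fam ?V ?E ?S m" for m
  proof -
    obtain T where T: "\<forall>i<m. steiner_tree ?V ?E ?S (fst (T i)) (snd (T i))"
      "\<forall>i<m. \<forall>j<m. i \<noteq> j \<longrightarrow> snd (T i) \<inter> snd (T j) = {}" using f unfolding fam_def by blast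
    have ex: "\<exists>q. {(0,0), q} \<in> snd (T i)" if i: "i < m" for i
    proof -
      have t: "is_tree (fst (T i)) (snd (T i))" "?S \<subseteq> fst (T i)" using T(1) i unfolding steiner_tree_def by auto
      have "card ?S \<le> card (fst (T i))" using card_mono[OF tree_facts(2)[OF t(1)] t(2)] .
      then have "2 \<le> card (fst (T i))" using S by simp
      moreover have "(0,0) \<in> fst (T i)" using t(2) by blast
      ultimately show ?thesis using tree_nb[OF t(1)] by blast
    qed
    define q where "q i = (SOME q. {(0,0), q} \<in> snd (T i))" for i
    have qi: "{(0,0), q i} \<in> snd (T i)" if "i < m" for i unfolding q_def using ex[OF that] by (rule someI_ex)
    have qE: "{(0,0), q i} \<in> ?E" if "i < m" for i using qi[OF that] T(1) that unfolding steiner_tree_def by blast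
    have inj: "inj_on (\<lambda>i. {(0::nat,0::nat), q i}) {..<m}"
    proof (rule inj_onI)
      fix i j assume ij: "i \<in> {..<m}" "j \<in> {..<m}" "{(0,0), q i} = {(0,0), q j}"
      show "i = j"
      proof (rule ccontr)
        assume "i \<noteq> j"
        then have "snd (T i) \<inter> snd (T j) = {}" using T(2) ij by auto
        moreover have "{(0,0), q i} \<in> snd (T i)" by (rule qi) (use ij(1) in simp)
        moreover have "{(0,0), q j} \<in> snd (T j)" by (rule qi) (use ij(2) in simp)
        ultimately show False using ij(3) by (metis disjoint_iff)
      qed
    qed
    have sub: "(\<lambda>i. {(0::nat,0::nat), q i}) ` {..<m} \<subseteq> (\<lambda>b. {(0,0),(1,b)}) ` VH0"
    proof
      fix e assume "e \<in> (\<lambda>i. {(0::nat,0::nat), q i}) ` {..<m}"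
      then obtain i where i: "i < m" "e = {(0,0), q i}" by blast
      have "fst (q i) = 1 \<and> snd (q i) \<in> VH0" using lex0[OF qE[OF i(1)]] .
      then have qq: "q i = (1, snd (q i))" "snd (q i) \<in> VH0" by (metis prod.collapse, blast)
      have "e = (\<lambda>b. {(0,0),(1,b)}) (snd (q i))" using i(2) qq(1) by simp
      then show "e \<in> (\<lambda>b. {(0,0),(1,b)}) ` VH0" using qq(2) by (rule image_eqI)
    qed
    have "card ((\<lambda>i. {(0::nat,0::nat), q i}) ` {..<m}) = m" using card_image[OF inj] by simp
    moreover have "card ((\<lambda>i. {(0::nat,0::nat), q i}) ` {..<m}) \<le> card ((\<lambda>b. {(0::nat,0::nat),(1::nat,b)}) ` VH0)"
      by (rule card_mono[OF _ sub]) simp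
    moreover have "card ((\<lambda>b. {(0::nat,0::nat),(1::nat,b)}) ` VH0) \<le> 3"
      using card_image_le[of VH0 "\<lambda>b. {(0::nat,0::nat),(1::nat,b)}"] by simp
    ultimately show ?thesis by simp
  qed
  have "lambda_S ?V ?E ?S \<le> 3"
  proof -
    have "{k. fam ?V ?E ?S k} \<noteq> {}" using fam_0 by blast
    then show ?thesis unfolding lambda_S_fam using fam_finite[OF g finS] bnd S(2) by (simp add: Max_le_iff)
  qed
  moreover have "lambda_k 3 ?V ?E \<le> lambda_S ?V ?E ?S"
  proof -
    have eq: "{lambda_S ?V ?E S |S. S \<subseteq> ?V \<and> card S = 3} = lambda_S ?V ?E ` {S. S \<subseteq> ?V \<and> card S = 3}" by blast
    have fin: "finite {lambda_S ?V ?E S |S. S \<subseteq> ?V \<and> card S = 3}" unfolding eq by simp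
    have mem: "lambda_S ?V ?E ?S \<in> {lambda_S ?V ?E S |S. S \<subseteq> ?V \<and> card S = 3}" using S by blast
    have "lambda_k 3 ?V ?E = Min {lambda_S ?V ?E S |S. S \<subseteq> ?V \<and> card S = 3}"
      unfolding lambda_k_def by (rule if_P[OF True])
    then show ?thesis using Min_le[OF fin mem] by simp
  qed
  ultimately show ?thesis by simp
qed

lemma sharp: "\<exists>(VG :: nat set) EG (VH :: nat set) EH.
            graph VG EG \<and> graph VH EH \<and> card VG \<ge> 3 \<and> card VH \<ge> 3 \<and> connected_graph VG EG \<and>
            lambda_k 3 (VG \<times> VH) (lex_edges VG EG VH EH)
              = lambda_k 3 VH EH + lambda_k 3 VG EG * card VH"
proof (intro exI conjI)
  show "graph VG0 EG0" by (rule gG0)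
  show "graph VH0 EH0" by (rule gH0)
  show "3 \<le> card VG0" by simp
  show "3 \<le> card VH0" by simp
  show "connected_graph VG0 EG0" by (rule cG0)
  have lo: "lambda_k 3 VH0 EH0 + lambda_k 3 VG0 EG0 * card VH0 \<le> lambda_k 3 (VG0 \<times> VH0) (lex_edges VG0 EG0 VH0 EH0)"
    by (rule part1[OF gG0 gH0 _ _ cG0]) simp_all
  have k1: "1 \<le> lambda_k 3 VG0 EG0" by (rule k_pos[OF gG0 cG0]) simp
  have c3: "card VH0 = 3" by simp
  show "lambda_k 3 (VG0 \<times> VH0) (lex_edges VG0 EG0 VH0 EH0) = lambda_k 3 VH0 EH0 + lambda_k 3 VG0 EG0 * card VH0"
    using lo k1 upper0 lH0 c3 by simp
qed


theorem theorem1: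
  shows "(\<forall>(VG :: 'a set) EG (VH :: 'b set) EH.
            graph VG EG \<and> graph VH EH \<and> card VG \<ge> 3 \<and> card VH \<ge> 3 \<and> connected_graph VG EG \<longrightarrow>
            lambda_k 3 (VG \<times> VH) (lex_edges VG EG VH EH)
              \<ge> lambda_k 3 VH EH + lambda_k 3 VG EG * card VH)
       \<and> (\<exists>(VG :: nat set) EG (VH :: nat set) EH.
            graph VG EG \<and> graph VH EH \<and> card VG \<ge> 3 \<and> card VH \<ge> 3 \<and> connected_graph VG EG \<and>
            lambda_k 3 (VG \<times> VH) (lex_edges VG EG VH EH)
              = lambda_k 3 VH EH + lambda_k 3 VG EG * card VH)"
proof (rule conjI)
  show "\<forall>(VG :: 'a set) EG (VH :: 'b set) EH.
            graph VG EG \<and> graph VH EH \<and> card VG \<ge> 3 \<and> card VH \<ge> 3 \<and> connected_graph VG EG \<longrightarrow>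
            lambda_k 3 (VG \<times> VH) (lex_edges VG EG VH EH)
              \<ge> lambda_k 3 VH EH + lambda_k 3 VG EG * card VH"
    using part1 by blast
  show "\<exists>(VG :: nat set) EG (VH :: nat set) EH.
            graph VG EG \<and> graph VH EH \<and> card VG \<ge> 3 \<and> card VH \<ge> 3 \<and> connected_graph VG EG \<and>
            lambda_k 3 (VG \<times> VH) (lex_edges VG EG VH EH)
              = lambda_k 3 VH EH + lambda_k 3 VG EG * card VH"
    by (rule sharp)
qed

end
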